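(* Let $d\in\{-163,-67,-43,-19,-11,-7,-3,-2,-1\}$ and work in $\mathcal O_{\mathbb{Q}(\sqrt{d})}$. Suppose $z\in\mathcal O_{\mathbb{Q}(\sqrt{d})}\setminus\{0\}$ satisfies $I_n^*(z)=t$ for some $n\in\{1,2\}$ and some $t\in\mathbb{N}\setminus\{1\}$. Then the norm $N(z)=z\bar z$ is even.
   Context: $\mathcal O_{\mathbb{Q}(\sqrt{d})}$ is $\mathbb{Z}[\frac{1+\sqrt d}{2}]$ if $d\equiv 1 \pmod 4$ and $\mathbb{Z}[\sqrt d]$ if $d\equiv 2,3\pmod 4$; for the listed $d$ it is a unique factorization domain. Viewing elements as complex numbers, $|z|=\sqrt{z\bar z}$ and $\arg(z)\in[0,2\pi)$. Define $A(d)$ to be the set of nonzero $z\in\mathcal O_{\mathbb{Q}(\sqrt{d})}$ with $0\le\arg(z)<\pi/2$ if $d=-1$, with $0\le \arg(z)<\pi/3$ if $d=-3$, and with $0\le\arg(z)<\pi$ otherwise. Two elements are relatively prime if they have no nonunit common divisor. For nonzero $x,z$, write $x\Diamond z$ iff $x\in A(d)$, $x\mid z$, and $x$ is relatively prime to $z/x$. For $m\in\mathbb{Z}$ define $\delta_m^*(z)=\sum_{x\Diamond z}|x|^m$ and $I_m^*(z)=\delta_m^*(z)/|z|^m$ for nonzero $z$. *)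

theory Defs
  imports "HOL-Analysis.Analysis"
begin

definition csqrt_int :: "int \<Rightarrow> complex" where
  "csqrt_int d = (if d \<ge> 0 then complex_of_real (sqrt (of_int d))
                  else \<i> * complex_of_real (sqrt (of_int (- d))))"

definition omega :: "int \<Rightarrow> complex" where
  "omega d = (if d mod 4 = 1 then (1 + csqrt_int d) / 2 else csqrt_int d)"

definition OK :: "int \<Rightarrow> complex set" where
  "OK d = {of_int a + of_int b * omega d | a b :: int. True}"

definition arg02pi :: "complex \<Rightarrow> real" where
  "arg02pi z = (if Arg z < 0 then Arg z + 2 * pi else Arg z)"

definition A :: "int \<Rightarrow> complex set" where
  "A d = {z \<in> OK d. z \<noteq> 0 \<and> 0 \<le> arg02pi z \<and>
            arg02pi z < (if d = -1 then pi / 2 else if d = -3 then pi / 3 else pi)}"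

definition dvdO :: "int \<Rightarrow> complex \<Rightarrow> complex \<Rightarrow> bool" where
  "dvdO d x y \<longleftrightarrow> x \<in> OK d \<and> (\<exists>w \<in> OK d. y = x * w)"

definition unitO :: "int \<Rightarrow> complex \<Rightarrow> bool" where
  "unitO d u \<longleftrightarrow> u \<in> OK d \<and> (\<exists>v \<in> OK d. u * v = 1)"

definition rel_primeO :: "int \<Rightarrow> complex \<Rightarrow> complex \<Rightarrow> bool" where
  "rel_primeO d x y \<longleftrightarrow> (\<forall>c \<in> OK d. dvdO d c x \<and> dvdO d c y \<longrightarrow> unitO d c)"

definition diamond :: "int \<Rightarrow> complex \<Rightarrow> complex \<Rightarrow> bool" where
  "diamond d x z \<longleftrightarrow> x \<in> A d \<and> dvdO d x z \<and> rel_primeO d x (z / x)"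

definition delta_star :: "int \<Rightarrow> int \<Rightarrow> complex \<Rightarrow> real" where
  "delta_star d m z = (\<Sum>x \<in> {x. diamond d x z}. cmod x powi m)"

definition I_star :: "int \<Rightarrow> int \<Rightarrow> complex \<Rightarrow> real" where
  "I_star d m z = delta_star d m z / (cmod z powi m)"

end

theory Submission
  imports Defs
begin


definition trw :: "int \<Rightarrow> int" where "trw d = (if d mod 4 = 1 then 1 else 0)"
definition nmw :: "int \<Rightarrow> int" where "nmw d = (if d mod 4 = 1 then (1 - d) div 4 else - d)"
definition inorm :: "complex \<Rightarrow> nat" where "inorm x = nat \<lfloor>(cmod x)^2\<rfloor>"

locale qring = fixes d :: int assumes d_neg: "d < 0"
begin

lemma csqrt_neg: "csqrt_int d = \<i> * of_real (sqrt (of_int (-d)))"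
  using d_neg by (simp add: csqrt_int_def)

lemma sq_sqrt_d: "of_real (sqrt (of_int (-d))) * of_real (sqrt (of_int (-d))) = (of_int (-d) :: complex)"
proof -
  have "sqrt (of_int (-d)) * sqrt (of_int (-d)) = (of_int (-d)::real)" using d_neg by simp
  then show ?thesis by (metis of_real_mult of_real_of_int_eq)
qed

lemma Im_w: "Im (omega d) = (if d mod 4 = 1 then sqrt(-d)/2 else sqrt(-d))"
  by (simp add: omega_def csqrt_neg)

lemma Re_w: "Re (omega d) = (if d mod 4 = 1 then 1/2 else 0)"
  by (simp add: omega_def csqrt_neg)

lemma Im_w_pos: "Im (omega d) > 0"
  using d_neg by (simp add: Im_w)

lemma w_sq: "omega d * omega d = of_int (trw d) * omega d - of_int (nmw d)"
proof (cases "d mod 4 = 1")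
  case True
  then have "4 dvd (1 - d)" by presburger
  then obtain k where k: "1 - d = 4 * k" by blast
  then have e: "(of_int ((1 - d) div 4) :: complex) = (1 - of_int d) / 4"
  proof -
    have "(1 - d) div 4 = k" using k by simp
    moreover have "(1 - of_int d :: complex) = of_int (1 - d)" by simp
    ultimately show ?thesis using k by simp
  qed
  let ?s = "of_real (sqrt (of_int (-d))) :: complex"
  have w: "omega d = (1 + \<i> * ?s) / 2" using True by (simp add: omega_def csqrt_neg)
  have q: "((1 + \<i> * ?s) / 2) * ((1 + \<i> * ?s) / 2) = (1 + \<i> * ?s) / 2 - (1 - of_int d) / 4"
  proof -
    have "((1 + \<i> * ?s) / 2) * ((1 + \<i> * ?s) / 2) = (1 + 2 * \<i> * ?s + \<i> * \<i> * (?s * ?s)) / 4"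
      by (simp add: field_simps)
    also have "\<dots> = (1 + 2 * \<i> * ?s + of_int d) / 4" using sq_sqrt_d by simp
    also have "\<dots> = (1 + \<i> * ?s) / 2 - (1 - of_int d) / 4" by (simp add: field_simps)
    finally show ?thesis .
  qed
  have t1: "trw d = 1" "nmw d = (1 - d) div 4" using True by (auto simp: trw_def nmw_def)
  show ?thesis unfolding t1 e of_int_1 mult_1 w by (rule q)
next
  case False
  let ?s = "of_real (sqrt (of_int (-d))) :: complex"
  have "omega d = \<i> * ?s" using False by (simp add: omega_def csqrt_neg)
  moreover have "(\<i> * ?s) * (\<i> * ?s) = of_int d"
    using sq_sqrt_d by (simp add: algebra_simps)
  ultimately show ?thesis using False by (simp add: trw_def nmw_def)
qed

lemma cnj_w: "cnj (omega d) = of_int (trw d) - omega d"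
  by (simp add: complex_eq_iff Re_w Im_w trw_def)

lemma OK_iff: "x \<in> OK d \<longleftrightarrow> (\<exists>a b. x = of_int a + of_int b * omega d)"
  by (simp add: OK_def)

lemma OK_intro: "of_int a + of_int b * omega d \<in> OK d"
  by (auto simp: OK_iff)

lemma OK_0 [simp]: "0 \<in> OK d"
  using OK_intro[of 0 0] by simp
lemma OK_1 [simp]: "1 \<in> OK d"
  using OK_intro[of 1 0] by simp
lemma OK_of_int [simp]: "of_int a \<in> OK d"
  using OK_intro[of a 0] by simp
lemma OK_of_nat [simp]: "of_nat a \<in> OK d"
  using OK_of_int[of "int a"] by simp
lemma OK_w [simp]: "omega d \<in> OK d"
  using OK_intro[of 0 1] by simp

lemma OK_add [simp, intro]: "x \<in> OK d \<Longrightarrow> y \<in> OK d \<Longrightarrow> x + y \<in> OK d"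
proof -
  assume "x \<in> OK d" "y \<in> OK d"
  then obtain a b a' b' where "x = of_int a + of_int b * omega d" "y = of_int a' + of_int b' * omega d"
    by (auto simp: OK_iff)
  then have "x + y = of_int (a + a') + of_int (b + b') * omega d" by (simp add: algebra_simps)
  then show ?thesis by (metis OK_intro)
qed

lemma OK_uminus [simp, intro]: "x \<in> OK d \<Longrightarrow> - x \<in> OK d"
proof -
  assume "x \<in> OK d"
  then obtain a b where "x = of_int a + of_int b * omega d" by (auto simp: OK_iff)
  then have "- x = of_int (-a) + of_int (-b) * omega d" by (simp add: algebra_simps)
  then show ?thesis by (metis OK_intro)
qed

lemma OK_diff [simp, intro]: "x \<in> OK d \<Longrightarrow> y \<in> OK d \<Longrightarrow> x - y \<in> OK d"
  by (metis OK_add OK_uminus diff_conv_add_uminus)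

lemma OK_mult [simp, intro]: "x \<in> OK d \<Longrightarrow> y \<in> OK d \<Longrightarrow> x * y \<in> OK d"
proof -
  assume "x \<in> OK d" "y \<in> OK d"
  then obtain a b a' b' where xy: "x = of_int a + of_int b * omega d" "y = of_int a' + of_int b' * omega d"
    by (auto simp: OK_iff)
  have "x * y = of_int (a*a') + of_int (a*b' + b*a') * omega d + of_int (b*b') * (omega d * omega d)"
    unfolding xy by (simp add: algebra_simps)
  also have "\<dots> = of_int (a*a' - b*b'*nmw d) + of_int (a*b' + b*a' + b*b'*trw d) * omega d"
    unfolding w_sq by (simp add: algebra_simps)
  finally show ?thesis by (metis OK_intro)
qed

lemma OK_power [simp, intro]: "x \<in> OK d \<Longrightarrow> x ^ k \<in> OK d"
  by (induction k) auto

lemma OK_cnj [simp, intro]: "x \<in> OK d \<Longrightarrow> cnj x \<in> OK d"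
proof -
  assume "x \<in> OK d"
  then obtain a b where x: "x = of_int a + of_int b * omega d" by (auto simp: OK_iff)
  have "cnj x = of_int (a + b * trw d) + of_int (- b) * omega d"
    unfolding x by (simp add: cnj_w algebra_simps)
  then show ?thesis by (metis OK_intro)
qed

lemma coords_unique:
  assumes "of_int a + of_int b * omega d = of_int a' + of_int b' * omega d"
  shows "a = a' \<and> b = b'"
proof -
  from arg_cong[OF assms, of Im] have "of_int b * Im (omega d) = of_int b' * Im (omega d)" by simp
  then have "b = b'" using Im_w_pos by simp
  with assms show ?thesis by simp
qed

lemma norm_form:
  assumes "x = of_int a + of_int b * omega d"
  shows "x * cnj x = of_int (a^2 + trw d * a * b + nmw d * b^2)"
proof -
  have "x * cnj x = of_int (a*a) + of_int (a*b*trw d) + of_int (b*b) * (of_int (trw d) * omega d - omega d * omega d)"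
    unfolding assms by (simp add: cnj_w algebra_simps)
  also have "\<dots> = of_int (a^2 + trw d * a * b + nmw d * b^2)"
    unfolding w_sq by (simp add: algebra_simps power2_eq_square)
  finally show ?thesis .
qed

lemma inorm_OK:
  assumes "x \<in> OK d"
  shows "of_nat (inorm x) = x * cnj x" and "real (inorm x) = (cmod x)^2"
proof -
  obtain a b where x: "x = of_int a + of_int b * omega d" using assms by (auto simp: OK_iff)
  define m where "m = a^2 + trw d * a * b + nmw d * b^2"
  have e: "x * cnj x = of_int m" using norm_form[OF x] m_def by simp
  have e2: "x * cnj x = of_real ((cmod x)^2)" by (metis complex_norm_square of_real_power)
  have "(cmod x)^2 = of_int m" using e e2 by (metis of_real_eq_iff of_real_of_int_eq)
  then have "m \<ge> 0" by (metis of_int_0_le_iff zero_le_power2)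
  have r: "real (inorm x) = (cmod x)^2"
    using \<open>(cmod x)^2 = of_int m\<close> \<open>m \<ge> 0\<close> by (simp add: inorm_def)
  show "real (inorm x) = (cmod x)^2" by (fact r)
  show "of_nat (inorm x) = x * cnj x"
    using r e2 by (metis of_real_of_nat_eq)
qed

lemma inorm_0_iff: "inorm x = 0 \<longleftrightarrow> x = 0" if "x \<in> OK d"
proof -
  have "inorm x = 0 \<longleftrightarrow> real (inorm x) = 0" by simp
  also have "\<dots> \<longleftrightarrow> (cmod x)^2 = 0" using inorm_OK(2)[OF that] by simp
  also have "\<dots> \<longleftrightarrow> x = 0" by simp
  finally show ?thesis .
qed

lemma inorm_mult: "x \<in> OK d \<Longrightarrow> y \<in> OK d \<Longrightarrow> inorm (x * y) = inorm x * inorm y"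
  using inorm_OK(2)[of x] inorm_OK(2)[of y] inorm_OK(2)[of "x*y"]
  by (metis OK_mult norm_mult of_nat_eq_iff of_nat_mult power_mult_distrib)

lemma inorm_1 [simp]: "inorm 1 = 1"
  by (simp add: inorm_def)

end


context qring begin

lemma dvdO_OK: "dvdO d x y \<Longrightarrow> x \<in> OK d" by (simp add: dvdO_def)
lemma dvdO_OK2: "dvdO d x y \<Longrightarrow> y \<in> OK d" by (auto simp: dvdO_def)
lemma dvdO_refl: "x \<in> OK d \<Longrightarrow> dvdO d x x"
  unfolding dvdO_def by (metis OK_1 mult_1_right)
lemma dvdO_0: "x \<in> OK d \<Longrightarrow> dvdO d x 0"
  unfolding dvdO_def by (metis OK_0 mult_zero_right)
lemma dvdO_trans: "dvdO d x y \<Longrightarrow> dvdO d y z \<Longrightarrow> dvdO d x z"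
  unfolding dvdO_def by (metis OK_mult mult.assoc)
lemma dvdO_mult: "dvdO d x y \<Longrightarrow> z \<in> OK d \<Longrightarrow> dvdO d x (y * z)"
  unfolding dvdO_def by (metis OK_mult mult.assoc)
lemma dvdO_mult2: "dvdO d x y \<Longrightarrow> z \<in> OK d \<Longrightarrow> dvdO d x (z * y)"
  by (metis dvdO_mult mult.commute)
lemma dvdO_triv: "x \<in> OK d \<Longrightarrow> y \<in> OK d \<Longrightarrow> dvdO d x (x * y)"
  unfolding dvdO_def by blast
lemma dvdO_triv2: "x \<in> OK d \<Longrightarrow> y \<in> OK d \<Longrightarrow> dvdO d x (y * x)"
  by (metis dvdO_triv mult.commute)
lemma dvdO_add: "dvdO d x y \<Longrightarrow> dvdO d x z \<Longrightarrow> dvdO d x (y + z)"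
  unfolding dvdO_def by (metis OK_add distrib_left)
lemma dvdO_diff: "dvdO d x y \<Longrightarrow> dvdO d x z \<Longrightarrow> dvdO d x (y - z)"
  unfolding dvdO_def by (metis OK_diff right_diff_distrib)
lemma dvdO_1: "y \<in> OK d \<Longrightarrow> dvdO d 1 y"
  unfolding dvdO_def by auto
lemma dvdO_mult_both: "dvdO d x y \<Longrightarrow> z \<in> OK d \<Longrightarrow> dvdO d (z * x) (z * y)"
  unfolding dvdO_def by (metis OK_mult mult.assoc)

lemma dvdO_div: "dvdO d x y \<Longrightarrow> x \<noteq> 0 \<Longrightarrow> y / x \<in> OK d \<and> y = x * (y / x)"
  unfolding dvdO_def by auto

lemma dvdO_iff_div: "x \<in> OK d \<Longrightarrow> x \<noteq> 0 \<Longrightarrow> dvdO d x y \<longleftrightarrow> y / x \<in> OK d"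
  unfolding dvdO_def by (auto intro!: bexI[of _ "y/x"])

lemma dvdO_0_iff: "dvdO d 0 y \<longleftrightarrow> y = 0"
proof
  assume "dvdO d 0 y" then show "y = 0" unfolding dvdO_def by auto
next
  assume "y = 0" then have "y = 0 * 0" by simp
  then show "dvdO d 0 y" unfolding dvdO_def using OK_0 by blast
qed

lemma dvdO_inorm: "dvdO d x y \<Longrightarrow> inorm x dvd inorm y"
  unfolding dvdO_def by (metis dvd_triv_left inorm_mult)

lemma dvdO_inorm_le: "dvdO d x y \<Longrightarrow> y \<noteq> 0 \<Longrightarrow> inorm x \<le> inorm y"
  by (metis dvdO_OK2 dvdO_inorm dvd_imp_le inorm_0_iff not_gr_zero)

lemma unitO_iff: "unitO d u \<longleftrightarrow> u \<in> OK d \<and> inorm u = 1"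
proof
  assume "unitO d u"
  then obtain v where "u \<in> OK d" "v \<in> OK d" "u * v = 1" by (auto simp: unitO_def)
  then have "inorm u * inorm v = 1" by (metis inorm_1 inorm_mult)
  then show "u \<in> OK d \<and> inorm u = 1" using \<open>u \<in> OK d\<close> by simp
next
  assume "u \<in> OK d \<and> inorm u = 1"
  then have "u * cnj u = 1" "cnj u \<in> OK d" using inorm_OK(1)[of u] by auto
  then show "unitO d u" using \<open>u \<in> OK d \<and> inorm u = 1\<close> by (auto simp: unitO_def)
qed

lemma unitO_OK: "unitO d u \<Longrightarrow> u \<in> OK d" by (simp add: unitO_def)
lemma unitO_nz: "unitO d u \<Longrightarrow> u \<noteq> 0" by (auto simp: unitO_def)
lemma unitO_1: "unitO d 1" by (simp add: unitO_iff)
lemma unitO_cmod: "unitO d u \<Longrightarrow> cmod u = 1"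
proof -
  assume "unitO d u"
  then have "(cmod u)^2 = 1" using inorm_OK(2)[of u] by (simp add: unitO_iff)
  then show ?thesis using norm_ge_zero[of u] by (metis abs_of_nonneg power2_eq_1_iff abs_neg_one abs_one one_neq_neg_one)
qed
lemma unitO_inv: "unitO d u \<Longrightarrow> 1 / u \<in> OK d \<and> unitO d (1/u)"
proof -
  assume u: "unitO d u"
  then obtain v where "v \<in> OK d" "u * v = 1" "u \<in> OK d" by (auto simp: unitO_def)
  then have "u \<noteq> 0" by auto
  then have "1 / u = v" using \<open>u * v = 1\<close> by (simp add: field_simps)
  then show ?thesis using \<open>v \<in> OK d\<close> \<open>u * v = 1\<close> \<open>u \<in> OK d\<close> by (auto simp: unitO_def mult.commute)
qed
lemma unitO_mult: "unitO d u \<Longrightarrow> unitO d v \<Longrightarrow> unitO d (u * v)"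
  by (simp add: unitO_iff inorm_mult)
lemma unitO_dvd: "unitO d u \<Longrightarrow> y \<in> OK d \<Longrightarrow> dvdO d u y"
proof -
  assume u: "unitO d u" and y: "y \<in> OK d"
  then have "1/u \<in> OK d" "u \<noteq> 0" using unitO_inv unitO_nz by auto
  then have "y * (1/u) \<in> OK d" using y OK_mult by blast
  moreover have "y = u * (y * (1/u))" using \<open>u \<noteq> 0\<close> by simp
  ultimately show ?thesis using unitO_OK[OF u] unfolding dvdO_def by blast
qed
lemma dvd_unitO: "dvdO d x u \<Longrightarrow> unitO d u \<Longrightarrow> unitO d x"
proof -
  assume "dvdO d x u" "unitO d u"
  then have "inorm x dvd 1" "x \<in> OK d" using dvdO_inorm[of x u] dvdO_OK unitO_iff by auto
  then show ?thesis by (simp add: unitO_iff)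
qed

lemma dvdO_unit_mult_iff: "unitO d u \<Longrightarrow> dvdO d (u * x) y \<longleftrightarrow> dvdO d x y"
proof
  assume u: "unitO d u" and h: "dvdO d (u * x) y"
  then obtain w where w: "w \<in> OK d" "y = u * x * w" "u * x \<in> OK d" by (auto simp: dvdO_def)
  have iu: "1/u \<in> OK d" "u \<noteq> 0" using unitO_inv[OF u] unitO_nz[OF u] by auto
  have "x = (1/u) * (u * x)" using iu by simp
  then have "x \<in> OK d" using iu w by (metis OK_mult)
  moreover have "y = x * (u * w)" using w by (simp add: algebra_simps)
  ultimately show "dvdO d x y" using w unitO_OK[OF u] by (auto simp: dvdO_def)
next
  assume u: "unitO d u" and h: "dvdO d x y"
  obtain w where w: "w \<in> OK d" "y = x * w" "x \<in> OK d" using h by (auto simp: dvdO_def)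
  have iu: "1/u \<in> OK d" "u \<noteq> 0" using unitO_inv[OF u] unitO_nz[OF u] by auto
  have "y = (u * x) * ((1/u) * w)" using w iu by simp
  moreover have "(1/u) * w \<in> OK d" "u * x \<in> OK d" using iu w unitO_OK[OF u] OK_mult by blast+
  ultimately show "dvdO d (u * x) y" unfolding dvdO_def by blast
qed

lemma dvdO_unit_mult_iff2: "unitO d u \<Longrightarrow> y \<in> OK d \<Longrightarrow> dvdO d x (u * y) \<longleftrightarrow> dvdO d x y"
proof
  assume u: "unitO d u" and y: "y \<in> OK d" and h: "dvdO d x (u * y)"
  have iu: "1/u \<in> OK d" "u \<noteq> 0" using unitO_inv[OF u] unitO_nz[OF u] by auto
  have "y = (1/u) * (u * y)" using iu by simp
  then show "dvdO d x y" using dvdO_mult2[OF h iu(1)] by simp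
next
  assume u: "unitO d u" and y: "y \<in> OK d" and h: "dvdO d x y"
  show "dvdO d x (u * y)" using dvdO_mult2[OF h unitO_OK[OF u]] .
qed

lemma dvdO_same_norm:
  assumes "dvdO d x y" "y \<noteq> 0" "inorm x = inorm y"
  shows "\<exists>u. unitO d u \<and> y = x * u"
proof -
  obtain w where w: "w \<in> OK d" "y = x * w" "x \<in> OK d" using assms by (auto simp: dvdO_def)
  have "inorm y = inorm x * inorm w" using w inorm_mult by simp
  moreover have "inorm y > 0" using assms(2) dvdO_OK2[OF assms(1)] inorm_0_iff by auto
  ultimately have "inorm w = 1" using assms(3) by simp
  then show ?thesis using w by (auto simp: unitO_iff)
qed

lemma rel_primeO_sym: "rel_primeO d x y \<longleftrightarrow> rel_primeO d y x"
  unfolding rel_primeO_def by blast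

lemma rel_primeO_dvd: "rel_primeO d x y \<Longrightarrow> dvdO d x' x \<Longrightarrow> rel_primeO d x' y"
  unfolding rel_primeO_def by (meson dvdO_trans)

lemma rel_primeO_dvd2: "rel_primeO d x y \<Longrightarrow> dvdO d y' y \<Longrightarrow> rel_primeO d x y'"
  unfolding rel_primeO_def by (meson dvdO_trans)

lemma bezout_rel_primeO:
  assumes "u \<in> OK d" "v \<in> OK d" "u * x + v * y = 1"
  shows "rel_primeO d x y"
  unfolding rel_primeO_def
proof (intro ballI impI)
  fix c assume "c \<in> OK d" "dvdO d c x \<and> dvdO d c y"
  then have "dvdO d c (u * x + v * y)" using assms by (meson dvdO_add dvdO_mult2)
  then have "dvdO d c 1" using assms by simp
  then show "unitO d c" using dvd_unitO unitO_1 by blast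
qed

lemma rel_primeO_unit: "unitO d u \<Longrightarrow> y \<in> OK d \<Longrightarrow> rel_primeO d u y"
proof -
  assume u: "unitO d u" and y: "y \<in> OK d"
  have "1/u \<in> OK d" "u \<noteq> 0" using unitO_inv[OF u] unitO_nz[OF u] by auto
  moreover have "(1/u) * u + 0 * y = 1" using \<open>u \<noteq> 0\<close> by simp
  ultimately show ?thesis using bezout_rel_primeO[of "1/u" 0 u y] by simp
qed

lemma rel_primeO_1: "y \<in> OK d \<Longrightarrow> rel_primeO d 1 y"
  using rel_primeO_unit unitO_1 by blast

end

locale bqring = qring +
  assumes bezout: "x \<in> OK d \<Longrightarrow> y \<in> OK d \<Longrightarrow>
     \<exists>g\<in>OK d. dvdO d g x \<and> dvdO d g y \<and> (\<exists>u\<in>OK d. \<exists>v\<in>OK d. g = u * x + v * y)"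
begin

lemma rel_primeO_bezout:
  assumes "x \<in> OK d" "y \<in> OK d" "rel_primeO d x y"
  shows "\<exists>u\<in>OK d. \<exists>v\<in>OK d. u * x + v * y = 1"
proof -
  obtain g u v where g: "g \<in> OK d" "dvdO d g x" "dvdO d g y" "u \<in> OK d" "v \<in> OK d" "g = u * x + v * y"
    using bezout[OF assms(1,2)] by blast
  then have "unitO d g" using assms(3) by (auto simp: rel_primeO_def)
  then have ig: "1/g \<in> OK d" "g \<noteq> 0" using unitO_inv unitO_nz by auto
  have "(1/g * u) * x + (1/g * v) * y = (1/g) * (u * x + v * y)" by (simp add: algebra_simps)
  also have "\<dots> = 1" using g ig by simp
  finally have "(1/g * u) * x + (1/g * v) * y = 1" .
  then show ?thesis using ig g by (metis OK_mult)
qed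

lemma gauss:
  assumes "rel_primeO d a b" "dvdO d a (b * c)" "b \<in> OK d" "c \<in> OK d"
  shows "dvdO d a c"
proof -
  have a: "a \<in> OK d" using assms(2) dvdO_OK by blast
  obtain u v where uv: "u \<in> OK d" "v \<in> OK d" "u * a + v * b = 1"
    using rel_primeO_bezout[OF a assms(3,1)] by blast
  have "c = (u * a + v * b) * c" using uv by simp
  then have "c = (u * c) * a + v * (b * c)" by (simp add: algebra_simps)
  moreover have "dvdO d a ((u * c) * a)" using a uv assms by (simp add: dvdO_triv2)
  moreover have "dvdO d a (v * (b * c))" using assms(2) uv by (simp add: dvdO_mult2)
  ultimately show ?thesis by (metis dvdO_add)
qed

lemma rel_primeO_mult:
  assumes "rel_primeO d a c" "rel_primeO d b c" "a \<in> OK d" "b \<in> OK d" "c \<in> OK d"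
  shows "rel_primeO d (a * b) c"
proof -
  obtain u v where uv: "u \<in> OK d" "v \<in> OK d" "u * a + v * c = 1"
    using rel_primeO_bezout[OF assms(3,5,1)] by blast
  obtain u' v' where uv': "u' \<in> OK d" "v' \<in> OK d" "u' * b + v' * c = 1"
    using rel_primeO_bezout[OF assms(4,5,2)] by blast
  have "(u * u') * (a * b) + (u * a * v' + v * (u' * b) + v * v' * c) * c = 1"
  proof -
    have "(u * a + v * c) * (u' * b + v' * c) = 1" using uv uv' by simp
    then show ?thesis by (simp add: algebra_simps)
  qed
  then show ?thesis using uv uv' assms by (intro bezout_rel_primeO[of "u*u'" "u * a * v' + v * (u' * b) + v * v' * c"]) auto
qed

lemma rel_primeO_power:
  assumes "rel_primeO d a c" "a \<in> OK d" "c \<in> OK d"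
  shows "rel_primeO d (a ^ k) c"
proof (induction k)
  case 0 then show ?case using rel_primeO_1 assms by simp
next
  case (Suc k) then show ?case using rel_primeO_mult[OF assms(1) Suc] assms by (simp add: mult.commute)
qed

definition primeO :: "complex \<Rightarrow> bool" where
  "primeO p \<longleftrightarrow> p \<in> OK d \<and> p \<noteq> 0 \<and> \<not> unitO d p \<and>
     (\<forall>a\<in>OK d. \<forall>b\<in>OK d. dvdO d p (a * b) \<longrightarrow> dvdO d p a \<or> dvdO d p b)"

lemma irreducible_prime:
  assumes p: "p \<in> OK d" "p \<noteq> 0" "\<not> unitO d p"
    and irr: "\<And>c. dvdO d c p \<Longrightarrow> unitO d c \<or> inorm c = inorm p"
  shows "primeO p"
  unfolding primeO_def
proof (intro conjI ballI impI p)
  fix a b assume ab: "a \<in> OK d" "b \<in> OK d" "dvdO d p (a * b)"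
  show "dvdO d p a \<or> dvdO d p b"
  proof (cases "dvdO d p a")
    case False
    have "rel_primeO d p a" unfolding rel_primeO_def
    proof (intro ballI impI)
      fix c assume c: "c \<in> OK d" "dvdO d c p \<and> dvdO d c a"
      show "unitO d c"
      proof (rule ccontr)
        assume "\<not> unitO d c"
        then have "inorm c = inorm p" using irr c by blast
        then obtain u where u: "unitO d u" "p = c * u" using dvdO_same_norm c p by blast
        then have "dvdO d (u * c) a" using c dvdO_unit_mult_iff by blast
        then show False using False u by (simp add: mult.commute)
      qed
    qed
    then show ?thesis using gauss ab by blast
  qed simp
qed

lemma exists_prime_dvd:
  assumes "z \<in> OK d" "z \<noteq> 0" "\<not> unitO d z"
  shows "\<exists>p. primeO p \<and> dvdO d p z"
  using assms
proof (induction "inorm z" arbitrary: z rule: less_induct)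
  case less
  show ?case
  proof (cases "\<exists>c. dvdO d c z \<and> \<not> unitO d c \<and> inorm c \<noteq> inorm z")
    case True
    then obtain c where c: "dvdO d c z" "\<not> unitO d c" "inorm c \<noteq> inorm z" by blast
    have "inorm c < inorm z" using dvdO_inorm_le[OF c(1) less(3)] c(3) by simp
    moreover have "c \<in> OK d" "c \<noteq> 0" using c(1) less(3) dvdO_OK dvdO_0_iff by blast+
    ultimately obtain p where "primeO p" "dvdO d p c" using less(1) c(2) by blast
    then show ?thesis using c(1) dvdO_trans by blast
  next
    case False
    then have "primeO z" using irreducible_prime less by blast
    then show ?thesis using dvdO_refl less(2) by blast
  qed
qed

lemma primeO_OK: "primeO p \<Longrightarrow> p \<in> OK d" by (simp add: primeO_def)
lemma primeO_nz: "primeO p \<Longrightarrow> p \<noteq> 0" by (simp add: primeO_def)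
lemma primeO_inorm: "primeO p \<Longrightarrow> inorm p \<ge> 2"
proof -
  assume p: "primeO p"
  then have "inorm p \<noteq> 0" "inorm p \<noteq> 1" using inorm_0_iff unitO_iff by (auto simp: primeO_def)
  then show ?thesis by simp
qed

lemma primeO_rel_primeO:
  assumes "primeO p" "a \<in> OK d" "\<not> dvdO d p a"
  shows "rel_primeO d p a"
  unfolding rel_primeO_def
proof (intro ballI impI)
  fix c assume c: "c \<in> OK d" "dvdO d c p \<and> dvdO d c a"
  obtain g u v where g: "g \<in> OK d" "dvdO d g c" "dvdO d g a" "u \<in> OK d" "v \<in> OK d" "g = u * c + v * a"
    using bezout[OF c(1) assms(2)] by blast
  have "dvdO d c g" unfolding g(6) using c g dvdO_refl[OF c(1)] by (meson dvdO_add dvdO_mult2)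
  obtain w where w: "w \<in> OK d" "p = c * w" using c by (auto simp: dvdO_def)
  have "dvdO d p (c * w)" using w assms(1) dvdO_refl primeO_OK by simp
  then have "dvdO d p c \<or> dvdO d p w" using assms(1) c w by (auto simp: primeO_def)
  then show "unitO d c"
  proof
    assume "dvdO d p c"
    then have "dvdO d p a" using c dvdO_trans by blast
    then show ?thesis using assms by simp
  next
    assume "dvdO d p w"
    then obtain k where k: "k \<in> OK d" "w = p * k" by (auto simp: dvdO_def)
    then have "p = p * (c * k)" using w by (simp add: algebra_simps)
    then have "c * k = 1" using primeO_nz[OF assms(1)] by simp
    then show ?thesis using c k by (auto simp: unitO_def)
  qed
qed

lemma primeO_dvd_power:
  assumes "primeO p" "dvdO d p (a ^ k)" "a \<in> OK d"
  shows "dvdO d p a"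
  using assms(2)
proof (induction k)
  case 0
  then have "unitO d p" using dvd_unitO unitO_1 by simp
  then show ?case using assms(1) by (simp add: primeO_def)
next
  case (Suc k)
  then show ?case using assms by (auto simp: primeO_def)
qed

lemma factor_out:
  assumes "primeO p" "z \<in> OK d" "z \<noteq> 0"
  shows "\<exists>e w. w \<in> OK d \<and> z = p ^ e * w \<and> \<not> dvdO d p w"
  using assms(2,3)
proof (induction "inorm z" arbitrary: z rule: less_induct)
  case less
  show ?case
  proof (cases "dvdO d p z")
    case False
    then show ?thesis using less by (intro exI[of _ 0] exI[of _ z]) simp
  next
    case True
    then obtain y where y: "y \<in> OK d" "z = p * y" by (auto simp: dvdO_def)
    then have "y \<noteq> 0" using less by auto
    have "inorm z = inorm p * inorm y" using y primeO_OK[OF assms(1)] inorm_mult by simp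
    moreover have "inorm y > 0" using \<open>y \<noteq> 0\<close> y inorm_0_iff by auto
    ultimately have "inorm y < inorm z" using primeO_inorm[OF assms(1)] by simp
    then obtain e w where "w \<in> OK d" "y = p ^ e * w" "\<not> dvdO d p w"
      using less(1) y \<open>y \<noteq> 0\<close> by blast
    then show ?thesis using y by (intro exI[of _ "Suc e"] exI[of _ w]) (simp add: mult.assoc)
  qed
qed

end


context qring begin

lemma one_in_A: "1 \<in> A d"
  unfolding A_def arg02pi_def by (auto simp: Arg_1)

lemma A_OK: "x \<in> A d \<Longrightarrow> x \<in> OK d" by (simp add: A_def)
lemma A_nz: "x \<in> A d \<Longrightarrow> x \<noteq> 0" by (simp add: A_def)

lemma rel_primeO_unit_left:
  assumes "unitO d u" "x \<in> OK d"
  shows "rel_primeO d (u * x) y \<longleftrightarrow> rel_primeO d x y"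
  unfolding rel_primeO_def
proof -
  have "\<And>c. dvdO d c (u * x) \<longleftrightarrow> dvdO d c x" using dvdO_unit_mult_iff2 assms by blast
  then show "(\<forall>c\<in>OK d. dvdO d c (u * x) \<and> dvdO d c y \<longrightarrow> unitO d c) =
    (\<forall>c\<in>OK d. dvdO d c x \<and> dvdO d c y \<longrightarrow> unitO d c)" by simp
qed

lemma rel_primeO_unit_right:
  assumes "unitO d u" "y \<in> OK d"
  shows "rel_primeO d x (u * y) \<longleftrightarrow> rel_primeO d x y"
  using rel_primeO_unit_left[OF assms] rel_primeO_sym by metis

lemma diamond_unit:
  assumes "unitO d u" "x \<in> OK d" "x \<noteq> 0" "z \<in> OK d"
  shows "dvdO d (u * x) z \<and> rel_primeO d (u * x) (z / (u * x)) \<longleftrightarrow> dvdO d x z \<and> rel_primeO d x (z / x)"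
proof (cases "dvdO d x z")
  case True
  have u0: "u \<noteq> 0" using unitO_nz[OF assms(1)] .
  have iu: "unitO d (1/u)" "1/u \<in> OK d" using unitO_inv[OF assms(1)] by auto
  have zx: "z / x \<in> OK d" using dvdO_div[OF True assms(3)] by simp
  have "z / (u * x) = (1/u) * (z / x)" using u0 by simp
  then have "rel_primeO d (u * x) (z / (u * x)) \<longleftrightarrow> rel_primeO d (u * x) (z / x)"
    using rel_primeO_unit_right[OF iu(1) zx] by simp
  also have "\<dots> \<longleftrightarrow> rel_primeO d x (z / x)" using rel_primeO_unit_left[OF assms(1,2)] by simp
  finally show ?thesis using dvdO_unit_mult_iff[OF assms(1)] by simp
next
  case False
  then show ?thesis using dvdO_unit_mult_iff[OF assms(1)] by simp
qed

end

locale nqring = bqring +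
  assumes norm_ex: "x \<in> OK d \<Longrightarrow> x \<noteq> 0 \<Longrightarrow> \<exists>u. unitO d u \<and> u * x \<in> A d"
    and norm_uniq: "x \<in> A d \<Longrightarrow> unitO d u \<Longrightarrow> u * x \<in> A d \<Longrightarrow> u = 1"
begin

definition nrm :: "complex \<Rightarrow> complex" where
  "nrm x = (SOME y. y \<in> A d \<and> (\<exists>u. unitO d u \<and> y = u * x))"

lemma nrm:
  assumes "x \<in> OK d" "x \<noteq> 0"
  shows "nrm x \<in> A d \<and> (\<exists>u. unitO d u \<and> nrm x = u * x)"
proof -
  obtain u where "unitO d u" "u * x \<in> A d" using norm_ex[OF assms] by blast
  then have "\<exists>y. y \<in> A d \<and> (\<exists>u. unitO d u \<and> y = u * x)" by blast
  then show ?thesis unfolding nrm_def by (rule someI_ex)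
qed

lemma nrm_cmod: "x \<in> OK d \<Longrightarrow> x \<noteq> 0 \<Longrightarrow> cmod (nrm x) = cmod x"
  using nrm unitO_cmod by (metis mult_1 norm_mult)

lemma A_assoc_eq:
  assumes "y \<in> A d" "y' \<in> A d" "unitO d u" "y' = u * y"
  shows "y' = y"
  using norm_uniq[OF assms(1,3)] assms by simp

lemma nrm_eq:
  assumes "x \<in> OK d" "x \<noteq> 0" "y \<in> A d" "unitO d u" "y = u * x"
  shows "nrm x = y"
proof -
  obtain v where v: "unitO d v" "nrm x = v * x" "nrm x \<in> A d" using nrm[OF assms(1,2)] by blast
  have "u \<noteq> 0" using unitO_nz assms(4) by blast
  have "nrm x = (v * (1/u)) * y" using v assms(5) \<open>u \<noteq> 0\<close> by simp
  moreover have "unitO d (v * (1/u))" using unitO_mult v unitO_inv assms(4) by blast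
  ultimately show ?thesis using A_assoc_eq[OF assms(3) v(3)] by blast
qed

lemma nrm_A: "x \<in> A d \<Longrightarrow> nrm x = x"
  using nrm_eq[of x x 1] A_OK A_nz unitO_1 by simp

definition Dset :: "complex \<Rightarrow> complex set" where
  "Dset z = {x. diamond d x z}"

lemma Dset_iff: "x \<in> Dset z \<longleftrightarrow> x \<in> A d \<and> dvdO d x z \<and> rel_primeO d x (z / x)"
  by (simp add: Dset_def diamond_def)

lemma diamond_nrm:
  assumes "x \<in> OK d" "x \<noteq> 0" "z \<in> OK d" "dvdO d x z" "rel_primeO d x (z / x)"
  shows "nrm x \<in> Dset z"
proof -
  obtain u where u: "unitO d u" "nrm x = u * x" "nrm x \<in> A d" using nrm[OF assms(1,2)] by blast
  show ?thesis unfolding Dset_iff using u diamond_unit[OF u(1) assms(1,2,3)] assms(4,5) by simp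
qed

lemma Dset_unit:
  assumes "unitO d z"
  shows "Dset z = {1}"
proof
  show "Dset z \<subseteq> {1}"
  proof
    fix x assume "x \<in> Dset z"
    then have x: "x \<in> A d" "dvdO d x z" by (auto simp: Dset_iff)
    then have "unitO d x" using dvd_unitO assms by blast
    then show "x \<in> {1}" using A_assoc_eq[OF one_in_A x(1)] by simp
  qed
next
  have "z \<in> OK d" using unitO_OK assms by blast
  then show "{1} \<subseteq> Dset z" using one_in_A dvdO_1 rel_primeO_1 by (simp add: Dset_iff)
qed

lemma step_sets:
  assumes p: "primeO p" and e: "e \<ge> 1" and w: "w \<in> OK d" "\<not> dvdO d p w"
    and z: "z = p ^ e * w"
  shows "Dset z = Dset w \<union> (\<lambda>y. nrm (p ^ e * y)) ` Dset w"
    and "Dset w \<inter> (\<lambda>y. nrm (p ^ e * y)) ` Dset w = {}"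
    and "inj_on (\<lambda>y. nrm (p ^ e * y)) (Dset w)"
    and "\<And>y. y \<in> Dset w \<Longrightarrow> cmod (nrm (p ^ e * y)) = cmod (p ^ e) * cmod y"
proof -
  define q where "q = p ^ e"
  have pO: "p \<in> OK d" "p \<noteq> 0" using p primeO_OK primeO_nz by auto
  have qO: "q \<in> OK d" "q \<noteq> 0" using pO by (auto simp: q_def)
  have w0: "w \<noteq> 0" using w(2) dvdO_0 pO by blast
  have zO: "z \<in> OK d" "z \<noteq> 0" using z qO w w0 by (auto simp: q_def)
  have pq: "dvdO d p q" using e pO unfolding q_def
    by (metis dvdO_triv le_add_diff_inverse OK_power power_add power_one_right)
  have relq: "rel_primeO d q a" if "a \<in> OK d" "\<not> dvdO d p a" for a
    using rel_primeO_power[OF primeO_rel_primeO[OF p that] pO(1) that(1)] rel_primeO_sym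
    unfolding q_def by (metis rel_primeO_power primeO_rel_primeO[OF p that] pO(1) that(1))
  have relq': "rel_primeO d a q" if "a \<in> OK d" "\<not> dvdO d p a" for a
    using relq[OF that] rel_primeO_sym by blast
  have zq: "z = q * w" using z q_def by simp
  have Dw: "y \<in> A d \<and> dvdO d y w \<and> rel_primeO d y (w / y) \<and> y \<in> OK d \<and> y \<noteq> 0 \<and> w / y \<in> OK d
            \<and> w = y * (w / y) \<and> \<not> dvdO d p y \<and> \<not> dvdO d p (w / y)" if "y \<in> Dset w" for y
  proof -
    have y: "y \<in> A d" "dvdO d y w" "rel_primeO d y (w / y)" using that by (auto simp: Dset_iff)
    have yO: "y \<in> OK d" "y \<noteq> 0" using A_OK A_nz y by auto
    have "w / y \<in> OK d" "w = y * (w / y)" using dvdO_div[OF y(2) yO(2)] by auto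
    moreover have "\<not> dvdO d p y" using y(2) w(2) dvdO_trans by blast
    moreover have "\<not> dvdO d p (w / y)"
      using w(2) dvdO_trans dvdO_triv2[OF \<open>w / y \<in> OK d\<close> yO(1)] \<open>w = y * (w / y)\<close> by metis
    ultimately show ?thesis using y yO by blast
  qed
  have sub1: "Dset w \<subseteq> Dset z"
  proof
    fix y assume "y \<in> Dset w"
    note D = Dw[OF this]
    have "dvdO d y z" unfolding zq using D dvdO_mult2 qO by blast
    moreover have "z / y = q * (w / y)" using zq D by simp
    moreover have "rel_primeO d y (q * (w / y))"
    proof -
      have "rel_primeO d q y" using relq D by blast
      then have "rel_primeO d (q * (w / y)) y"
        using rel_primeO_mult[of q y "w/y"] D qO rel_primeO_sym by blast
      then show ?thesis using rel_primeO_sym by blast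
    qed
    ultimately show "y \<in> Dset z" using D by (simp add: Dset_iff)
  qed
  have img: "nrm (q * y) \<in> Dset z \<and> dvdO d p (nrm (q * y)) \<and> cmod (nrm (q * y)) = cmod q * cmod y"
    if "y \<in> Dset w" for y
  proof -
    note D = Dw[OF that]
    have xO: "q * y \<in> OK d" "q * y \<noteq> 0" using qO D by auto
    have dz: "dvdO d (q * y) z" unfolding zq using dvdO_mult_both[OF D[THEN conjunct2, THEN conjunct1] qO(1)] by simp
    have zx: "z / (q * y) = w / y" using zq qO D by simp
    have "rel_primeO d (q * y) (w / y)"
      using rel_primeO_mult[of q "w/y" y] relq D qO by blast
    then have "nrm (q * y) \<in> Dset z" using diamond_nrm[OF xO zO(1) dz] zx by simp
    moreover obtain u where u: "unitO d u" "nrm (q * y) = u * (q * y)" using nrm[OF xO] by blast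
    moreover have "dvdO d p (u * (q * y))"
      using pq dvdO_mult2 dvdO_mult u D unitO_OK by (metis mult.assoc mult.commute)
    moreover have "cmod (nrm (q * y)) = cmod q * cmod y" using nrm_cmod[OF xO] by (simp add: norm_mult)
    ultimately show ?thesis by simp
  qed
  have sub3: "x \<in> Dset w \<union> (\<lambda>y. nrm (q * y)) ` Dset w" if "x \<in> Dset z" for x
  proof -
    have x: "x \<in> A d" "dvdO d x z" "rel_primeO d x (z / x)" using that by (auto simp: Dset_iff)
    have xO: "x \<in> OK d" "x \<noteq> 0" using x A_OK A_nz by auto
    define r where "r = z / x"
    have rO: "r \<in> OK d" "z = x * r" using dvdO_div[OF x(2) xO(2)] r_def by auto
    show ?thesis
    proof (cases "dvdO d p x")
      case False
      have "rel_primeO d x q" using relq' xO False by blast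
      then have "dvdO d x w" using gauss[of x q w] x(2) zq qO w by simp
      moreover have "z / x = q * (w / x)" using zq xO by simp
      moreover have "dvdO d (w / x) (z / x)"
      proof -
        have "w / x \<in> OK d" using dvdO_div[OF \<open>dvdO d x w\<close> xO(2)] by blast
        then have "dvdO d (w / x) (q * (w / x))" using dvdO_triv2[OF _ qO(1)] by blast
        then show ?thesis using \<open>z / x = q * (w / x)\<close> by (simp only:)
      qed
      ultimately have "x \<in> Dset w" using x rel_primeO_dvd2 by (auto simp: Dset_iff)
      then show ?thesis by simp
    next
      case True
      have npr: "\<not> dvdO d p r"
      proof
        assume "dvdO d p r"
        then have "unitO d p" using x(3) True pO unfolding rel_primeO_def r_def by blast
        then show False using p by (simp add: primeO_def)
      qed
      have "rel_primeO d q r" using relq rO npr by blast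
      moreover have "dvdO d q (r * x)" using rO zq qO w by (metis dvdO_triv mult.commute)
      ultimately have "dvdO d q x" using gauss xO rO by blast
      then obtain y where y: "y \<in> OK d" "x = q * y" by (auto simp: dvdO_def)
      have y0: "y \<noteq> 0" using y xO by auto
      obtain u where u: "unitO d u" "nrm y = u * y" "nrm y \<in> A d" using nrm[OF y(1) y0] by blast
      have u0: "u \<noteq> 0" using unitO_nz u by blast
      have iu: "unitO d (1/u)" "1/u \<in> OK d" using unitO_inv[OF u(1)] by auto
      have wy: "w = y * r" using zq rO y qO by simp
      have "dvdO d y w" using wy y rO dvdO_triv by blast
      moreover have "rel_primeO d y r" using x(3) y rO rel_primeO_dvd[of x "z/x" y] dvdO_triv2 qO r_def
        by (metis dvdO_triv2)
      moreover have "w / y = r" using wy y0 by simp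
      ultimately have yD: "dvdO d y w \<and> rel_primeO d y (w / y)" by simp
      have "nrm y \<in> Dset w" using diamond_nrm[OF y(1) y0 w(1)] yD by simp
      moreover have "nrm (q * nrm y) = x"
      proof -
        have "q * nrm y \<in> OK d" "q * nrm y \<noteq> 0" using qO y y0 A_OK[OF u(3)] A_nz[OF u(3)] by auto
        moreover have "x = (1/u) * (q * nrm y)" using u y u0 by simp
        ultimately show ?thesis using nrm_eq[of "q * nrm y" x "1/u"] x(1) iu by simp
      qed
      ultimately show ?thesis by force
    qed
  qed
  show "Dset z = Dset w \<union> (\<lambda>y. nrm (p ^ e * y)) ` Dset w"
    using sub1 sub3 img unfolding q_def by blast
  show "Dset w \<inter> (\<lambda>y. nrm (p ^ e * y)) ` Dset w = {}"
    using img Dw unfolding q_def by blast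
  show "inj_on (\<lambda>y. nrm (p ^ e * y)) (Dset w)"
  proof (rule inj_onI)
    fix y1 y2 assume y: "y1 \<in> Dset w" "y2 \<in> Dset w" "nrm (p ^ e * y1) = nrm (p ^ e * y2)"
    note D1 = Dw[OF y(1)] and D2 = Dw[OF y(2)]
    have x1: "q * y1 \<in> OK d" "q * y1 \<noteq> 0" using D1 qO by auto
    have x2: "q * y2 \<in> OK d" "q * y2 \<noteq> 0" using D2 qO by auto
    obtain u1 where u1: "unitO d u1" "nrm (q * y1) = u1 * (q * y1)" using nrm[OF x1] by blast
    obtain u2 where u2: "unitO d u2" "nrm (q * y2) = u2 * (q * y2)" using nrm[OF x2] by blast
    have "u1 \<noteq> 0" using unitO_nz u1 by blast
    have "u1 * (q * y1) = u2 * (q * y2)" using u1 u2 y(3) q_def by simp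
    then have "y1 = (u2 * (1/u1)) * y2" using \<open>u1 \<noteq> 0\<close> qO by (simp add: field_simps)
    moreover have "unitO d (u2 * (1/u1))" using unitO_mult unitO_inv u1 u2 by blast
    ultimately show "y1 = y2" using A_assoc_eq D1 D2 by blast
  qed
  show "\<And>y. y \<in> Dset w \<Longrightarrow> cmod (nrm (p ^ e * y)) = cmod (p ^ e) * cmod y"
    using img q_def by simp
qed

end


context nqring begin

lemma inorm_power: "x \<in> OK d \<Longrightarrow> inorm (x ^ k) = inorm x ^ k"
  by (induction k) (auto simp: inorm_mult)

lemma cmod_sqrt_inorm: "x \<in> OK d \<Longrightarrow> cmod x = sqrt (real (inorm x))"
  using inorm_OK(2) by simp

lemma aux_field: "(Q::real) > 0 \<Longrightarrow> W > 0 \<Longrightarrow> (1 + Q) * D / (Q * W) = (1 + inverse Q) * (D / W)"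
  by (simp add: field_simps)

lemma main_rep:
  assumes "z \<in> OK d" "z \<noteq> 0"
  shows "\<exists>ms. finite (Dset z) \<and> prod_list ms = inorm z \<and> (\<forall>m\<in>set ms. m \<ge> 2) \<and>
           I_star d n z = prod_list (map (\<lambda>m. 1 + inverse (sqrt (real m) powi n)) ms)"
  using assms
proof (induction "inorm z" arbitrary: z rule: less_induct)
  case less
  show ?case
  proof (cases "unitO d z")
    case True
    have "Dset z = {1}" using Dset_unit[OF True] .
    moreover have "cmod z = 1" using unitO_cmod[OF True] .
    ultimately have "I_star d n z = 1"
      unfolding I_star_def delta_star_def Dset_def[symmetric] by simp
    moreover have "inorm z = 1" using True by (simp add: unitO_iff)
    ultimately show ?thesis using \<open>Dset z = {1}\<close> by (intro exI[of _ "[]"]) simp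
  next
    case False
    obtain p where p: "primeO p" "dvdO d p z" using exists_prime_dvd[OF less(2,3) False] by blast
    obtain e w where ew: "w \<in> OK d" "z = p ^ e * w" "\<not> dvdO d p w" using factor_out[OF p(1) less(2,3)] by blast
    have e: "e \<ge> 1"
    proof (rule ccontr)
      assume "\<not> e \<ge> 1" then have "e = 0" by simp
      then show False using ew p by simp
    qed
    have pO: "p \<in> OK d" "p \<noteq> 0" using p primeO_OK primeO_nz by auto
    define q where "q = p ^ e"
    have qO: "q \<in> OK d" "q \<noteq> 0" using pO q_def by auto
    have w0: "w \<noteq> 0" using ew less(3) by auto
    have nz: "inorm z = inorm q * inorm w" using ew qO q_def inorm_mult by simp
    have nq: "inorm q \<ge> 2"
    proof -
      have "inorm q = inorm p ^ e" using inorm_power pO q_def by simp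
      moreover have "inorm p \<ge> 2" using primeO_inorm p by simp
      ultimately show ?thesis using e by (metis dual_order.trans one_le_numeral power_increasing power_one_right)
    qed
    have nw: "inorm w > 0" using w0 ew inorm_0_iff by auto
    have "inorm w < inorm z" using nz nq nw by simp
    then obtain ms where ms: "finite (Dset w)" "prod_list ms = inorm w" "\<forall>m\<in>set ms. m \<ge> 2"
      "I_star d n w = prod_list (map (\<lambda>m. 1 + inverse (sqrt (real m) powi n)) ms)"
      using less(1) ew(1) w0 by blast
    note S = step_sets[OF p(1) e ew(1,3) ew(2)]
    let ?f = "\<lambda>y. nrm (p ^ e * y)"
    have fin: "finite (Dset z)" using S(1) ms(1) by simp
    have "delta_star d n z = (\<Sum>x\<in>Dset z. cmod x powi n)"
      unfolding delta_star_def Dset_def ..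
    also have "\<dots> = (\<Sum>x\<in>Dset w. cmod x powi n) + (\<Sum>x\<in>?f ` Dset w. cmod x powi n)"
      unfolding S(1) using S(2) ms(1) by (intro sum.union_disjoint) auto
    also have "(\<Sum>x\<in>?f ` Dset w. cmod x powi n) = (\<Sum>y\<in>Dset w. cmod (?f y) powi n)"
      using sum.reindex[OF S(3)] by simp
    also have "\<dots> = (\<Sum>y\<in>Dset w. cmod q powi n * cmod y powi n)"
      using S(4) unfolding q_def by (intro sum.cong) (auto simp: power_int_mult_distrib)
    also have "\<dots> = cmod q powi n * delta_star d n w"
      unfolding delta_star_def Dset_def[symmetric] by (simp add: sum_distrib_left)
    finally have dz: "delta_star d n z = (1 + cmod q powi n) * delta_star d n w"
      unfolding delta_star_def Dset_def[symmetric] by (simp add: algebra_simps)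
    have cq: "cmod q powi n > 0" using qO by simp
    have cw: "cmod w powi n > 0" using w0 by simp
    have "cmod z powi n = cmod q powi n * cmod w powi n"
      using ew q_def by (simp add: norm_mult power_int_mult_distrib)
    then have "I_star d n z = (1 + inverse (cmod q powi n)) * I_star d n w"
      unfolding I_star_def dz using aux_field[OF cq cw] by simp
    moreover have "cmod q = sqrt (real (inorm q))" using cmod_sqrt_inorm qO by simp
    ultimately have "I_star d n z = prod_list (map (\<lambda>m. 1 + inverse (sqrt (real m) powi n)) (inorm q # ms))"
      using ms(4) by simp
    moreover have "prod_list (inorm q # ms) = inorm z" using nz ms(2) by simp
    ultimately show ?thesis using fin nq ms(3) by (intro exI[of _ "inorm q # ms"]) auto
  qed
qed

end


section \<open>Arithmetic: the 2-adic argument\<close>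

lemma prod_inv_identity:
  "(\<forall>c\<in>set cs. c > 0) \<Longrightarrow>
   prod_list (map (\<lambda>c. 1 + 1 / real c) cs) = real (prod_list (map Suc cs)) / real (prod_list cs)"
proof (induction cs)
  case Nil then show ?case by simp
next
  case (Cons c cs)
  then have "c > 0" by simp
  then show ?case using Cons by (simp add: field_simps)
qed

lemma two_pow_dvd: "(\<forall>c\<in>set cs. odd c) \<Longrightarrow> 2 ^ length cs dvd prod_list (map Suc cs)"
proof (induction cs)
  case Nil then show ?case by simp
next
  case (Cons c cs)
  then have "2 dvd Suc c" by simp
  moreover have "2 ^ length cs dvd prod_list (map Suc cs)" using Cons by simp
  ultimately have "2 * 2 ^ length cs dvd Suc c * prod_list (map Suc cs)" by (rule mult_dvd_mono)
  then show ?case by simp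
qed

lemma odd_prod: "(\<forall>c\<in>set cs. odd c) \<Longrightarrow> odd (prod_list cs)"
  by (induction cs) auto

lemma prod_Suc_less: "cs \<noteq> [] \<Longrightarrow> (\<forall>c\<in>set cs. c \<ge> 2) \<Longrightarrow> prod_list (map Suc cs) < 2 ^ length cs * prod_list cs"
proof (induction cs)
  case Nil then show ?case by simp
next
  case (Cons c cs)
  show ?case
  proof (cases "cs = []")
    case True then show ?thesis using Cons by simp
  next
    case False
    then have ih: "prod_list (map Suc cs) < 2 ^ length cs * prod_list cs" using Cons by simp
    have "Suc c < 2 * c" using Cons by simp
    then have "Suc c * prod_list (map Suc cs) < (2 * c) * (2 ^ length cs * prod_list cs)"
      using ih by (intro mult_strict_mono) auto
    then show ?thesis by (simp add: algebra_simps)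
  qed
qed

lemma two_adic:
  assumes "cs \<noteq> []" "\<forall>c\<in>set cs. odd c \<and> c \<ge> 2"
    and "prod_list (map (\<lambda>c. 1 + 1 / real c) cs) = real t"
  shows False
proof -
  let ?P = "prod_list cs" and ?Q = "prod_list (map Suc cs)" and ?k = "length cs"
  have pos: "\<forall>c\<in>set cs. c > 0" using assms(2) by auto
  have P0: "?P > 0" using pos by (induction cs) auto
  have "real t = real ?Q / real ?P" using prod_inv_identity[OF pos] assms(3) by simp
  then have tPQ: "t * ?P = ?Q" using P0
    by (metis nonzero_divide_eq_eq of_nat_eq_iff of_nat_mult of_nat_0_less_iff less_irrefl)
  have "2 ^ ?k dvd t * ?P" using two_pow_dvd assms(2) tPQ by simp
  moreover have "coprime (2 ^ ?k) ?P"
  proof -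
    have "odd ?P" using odd_prod assms(2) by blast
    then show ?thesis by (simp add: coprime_power_left_iff coprime_left_2_iff_odd)
  qed
  ultimately have "2 ^ ?k dvd t" using coprime_dvd_mult_left_iff by blast
  moreover have "t > 0"
  proof -
    have "?Q > 0" by (induction cs) auto
    then show ?thesis using tPQ by (metis gr0I mult_0)
  qed
  ultimately have "t \<ge> 2 ^ ?k" by (simp add: dvd_imp_le)
  moreover have "?Q < 2 ^ ?k * ?P" using prod_Suc_less assms(1,2) by simp
  then have "t * ?P < 2 ^ ?k * ?P" using tPQ by simp
  then have "t < 2 ^ ?k" by simp
  ultimately show False by simp
qed

section \<open>A tower of real quadratic fields\<close>

fun Ftw :: "nat list \<Rightarrow> real set" where
  "Ftw [] = \<rat>"
| "Ftw (p # ps) = {a + b * sqrt (real p) | a b. a \<in> Ftw ps \<and> b \<in> Ftw ps}"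

lemma Ftw_ConsI: "a \<in> Ftw ps \<Longrightarrow> b \<in> Ftw ps \<Longrightarrow> x = a + b * sqrt (real p) \<Longrightarrow> x \<in> Ftw (p # ps)"
  unfolding Ftw.simps by blast

lemma Ftw_ring: "\<rat> \<subseteq> Ftw ps \<and> (\<forall>x\<in>Ftw ps. \<forall>y\<in>Ftw ps. x + y \<in> Ftw ps \<and> x * y \<in> Ftw ps \<and> - x \<in> Ftw ps)"
proof (induction ps)
  case Nil then show ?case by simp
next
  case (Cons p ps)
  let ?F = "Ftw ps" and ?s = "sqrt (real p)"
  have ss: "?s * ?s = real p" by simp
  have pF: "real p \<in> ?F" using Cons by (metis Rats_of_nat subsetD)
  have 0: "0 \<in> ?F" using Cons by (metis Rats_0 subsetD)
  have "r \<in> Ftw (p # ps)" if "r \<in> \<rat>" for r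
  proof -
    have "r = r + 0 * ?s" by simp
    moreover have "r \<in> ?F" using Cons that by blast
    ultimately show ?thesis using 0 Ftw_ConsI by blast
  qed
  moreover have "x + y \<in> Ftw (p # ps) \<and> x * y \<in> Ftw (p # ps) \<and> - x \<in> Ftw (p # ps)"
    if xy: "x \<in> Ftw (p # ps)" "y \<in> Ftw (p # ps)" for x y
  proof -
    obtain a b where ab: "a \<in> ?F" "b \<in> ?F" "x = a + b * ?s" using xy(1) unfolding Ftw.simps by blast
    obtain c e where ce: "c \<in> ?F" "e \<in> ?F" "y = c + e * ?s" using xy(2) unfolding Ftw.simps by blast
    have "x + y = (a + c) + (b + e) * ?s" using ab ce by (simp add: algebra_simps)
    moreover have "a + c \<in> ?F" "b + e \<in> ?F" using Cons ab ce by auto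
    ultimately have 1: "x + y \<in> Ftw (p # ps)" using Ftw_ConsI by blast
    have "x * y = (a * c + real p * (b * e)) + (a * e + b * c) * ?s"
      using ab ce ss by (simp add: algebra_simps)
    moreover have "a * c + real p * (b * e) \<in> ?F" "a * e + b * c \<in> ?F" using Cons ab ce pF by auto
    ultimately have 2: "x * y \<in> Ftw (p # ps)" using Ftw_ConsI by blast
    have "- x = (- a) + (- b) * ?s" using ab by simp
    moreover have "- a \<in> ?F" "- b \<in> ?F" using Cons ab by auto
    ultimately have 3: "- x \<in> Ftw (p # ps)" using Ftw_ConsI by blast
    show ?thesis using 1 2 3 by blast
  qed
  ultimately show ?case by blast
qed

lemma Ftw_Rats: "x \<in> \<rat> \<Longrightarrow> x \<in> Ftw ps" using Ftw_ring by blast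
lemma Ftw_add: "x \<in> Ftw ps \<Longrightarrow> y \<in> Ftw ps \<Longrightarrow> x + y \<in> Ftw ps" using Ftw_ring by blast
lemma Ftw_mult: "x \<in> Ftw ps \<Longrightarrow> y \<in> Ftw ps \<Longrightarrow> x * y \<in> Ftw ps" using Ftw_ring by blast
lemma Ftw_uminus: "x \<in> Ftw ps \<Longrightarrow> - x \<in> Ftw ps" using Ftw_ring by blast
lemma Ftw_diff: "x \<in> Ftw ps \<Longrightarrow> y \<in> Ftw ps \<Longrightarrow> x - y \<in> Ftw ps"
  using Ftw_add Ftw_uminus by (metis diff_conv_add_uminus)
lemma Ftw_of_nat: "real n \<in> Ftw ps" using Ftw_Rats Rats_of_nat by blast
lemma Ftw_power: "x \<in> Ftw ps \<Longrightarrow> x ^ k \<in> Ftw ps"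
  by (induction k) (auto intro: Ftw_mult Ftw_Rats)

lemma Ftw_mono: "x \<in> Ftw ps \<Longrightarrow> x \<in> Ftw (p # ps)"
proof -
  assume "x \<in> Ftw ps"
  moreover have "x = x + 0 * sqrt (real p)" by simp
  moreover have "0 \<in> Ftw ps" using Ftw_Rats by simp
  ultimately show ?thesis using Ftw_ConsI by blast
qed

lemma Ftw_sqrt_mem: "p \<in> set ps \<Longrightarrow> sqrt (real p) \<in> Ftw ps"
proof (induction ps)
  case Nil then show ?case by simp
next
  case (Cons q ps)
  show ?case
  proof (cases "p = q")
    case True
    have "sqrt (real p) = 0 + 1 * sqrt (real q)" using True by simp
    moreover have "0 \<in> Ftw ps" "1 \<in> Ftw ps" using Ftw_Rats by auto
    ultimately show ?thesis using Ftw_ConsI True by blast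
  next
    case False then show ?thesis using Cons Ftw_mono by auto
  qed
qed

definition sqf :: "nat \<Rightarrow> bool" where
  "sqf m \<longleftrightarrow> (\<forall>r. prime r \<longrightarrow> r dvd m \<longrightarrow> \<not> r ^ 2 dvd m)"

lemma sqrt_irr:
  assumes "sqf m" "m > 1"
  shows "sqrt (real m) \<notin> \<rat>"
proof
  assume "sqrt (real m) \<in> \<rat>"
  then obtain a b :: int where ab: "b > 0" "sqrt (real m) = of_int a / of_int b" by (auto elim: Rats_cases')
  obtain r where r: "prime r" "r dvd m" using prime_factor_nat[of m] assms(2) by auto
  have nr2: "\<not> r ^ 2 dvd m" using assms(1) r by (simp add: sqf_def)
  have "a \<ge> 0"
  proof (rule ccontr)
    assume "\<not> a \<ge> 0"
    then have "(of_int a :: real) / of_int b < 0" using ab(1) by (simp add: divide_neg_pos)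
    then show False using ab(2) real_sqrt_ge_zero[of "real m"] by simp
  qed
  define a' where "a' = nat a"
  define b' where "b' = nat b"
  have a'b': "sqrt (real m) = real a' / real b'" "b' > 0" using ab \<open>a \<ge> 0\<close> by (auto simp: a'_def b'_def)
  have "real m = (real a' / real b')^2" using a'b' by (metis of_nat_0_le_iff real_sqrt_pow2)
  then have "real m * real b' ^ 2 = real a' ^ 2" using a'b' by (simp add: field_simps)
  then have eq: "m * b' ^ 2 = a' ^ 2" by (metis of_nat_eq_iff of_nat_mult of_nat_power)
  have m0: "m \<noteq> 0" "b' \<noteq> 0" using assms a'b' by auto
  then have a0: "a' \<noteq> 0" using eq by (cases "a' = 0") auto
  have nu: "\<not> is_unit r" using prime_gt_1_nat[OF r(1)] by simp
  have "1 \<le> multiplicity r m" using power_dvd_iff_le_multiplicity[OF m0(1) nu, of 1] r by simp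
  moreover have "\<not> 2 \<le> multiplicity r m" using power_dvd_iff_le_multiplicity[OF m0(1) nu, of 2] nr2 by simp
  ultimately have m1: "multiplicity r m = 1" by simp
  have pe: "prime_elem r" using r by simp
  have "multiplicity r (m * b' ^ 2) = 1 + 2 * multiplicity r b'"
    using prime_elem_multiplicity_mult_distrib[OF pe m0(1)] prime_elem_multiplicity_power_distrib[OF pe m0(2)] m1 m0
    by simp
  moreover have "multiplicity r (a' ^ 2) = 2 * multiplicity r a'"
    using prime_elem_multiplicity_power_distrib[OF pe a0] by simp
  ultimately have "1 + 2 * multiplicity r b' = 2 * multiplicity r a'" using eq by simp
  then show False by presburger
qed

lemma prime_sqf: "prime p \<Longrightarrow> sqf p"
  unfolding sqf_def
proof (intro allI impI notI)
  fix r assume "prime p" "prime r" "r dvd p" "r ^ 2 dvd p"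
  then have "r = p" by (simp add: primes_dvd_imp_eq)
  then have "p ^ 2 dvd p" using \<open>r ^ 2 dvd p\<close> by simp
  then have "p ^ 2 \<le> p" using \<open>prime p\<close> by (simp add: dvd_imp_le prime_gt_0_nat)
  moreover have "p < p ^ 2"
  proof -
    have "1 < p" using prime_gt_1_nat[OF \<open>prime p\<close>] .
    then have "p * 1 < p * p" by (intro mult_strict_left_mono) auto
    then show ?thesis by (simp add: power2_eq_square)
  qed
  ultimately show False by simp
qed

lemma sqf_mult_prime:
  assumes "sqf m" "prime p" "\<not> p dvd m"
  shows "sqf (m * p)"
  unfolding sqf_def
proof (intro allI impI notI)
  fix r assume r: "prime r" "r dvd m * p" "r ^ 2 dvd m * p"
  show False
  proof (cases "r = p")
    case True
    then have "p * p dvd m * p" using r by (simp add: power2_eq_square)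
    then have "p dvd m" using prime_gt_0_nat[OF assms(2)] by (simp add: dvd_mult_cancel_right)
    then show False using assms(3) by simp
  next
    case False
    then have "coprime r p" using r(1) assms(2) by (simp add: primes_coprime)
    then have "coprime (r ^ 2) p" by simp
    then have "r ^ 2 dvd m" using r(3) coprime_dvd_mult_left_iff by blast
    moreover have "r dvd m" using calculation by (meson dvd_power dvd_trans zero_less_numeral)
    ultimately show False using assms(1) r(1) by (simp add: sqf_def)
  qed
qed

lemma Ftw_field:
  assumes "distinct ps" "\<forall>p\<in>set ps. prime p"
  shows "(\<forall>x\<in>Ftw ps. x \<noteq> 0 \<longrightarrow> inverse x \<in> Ftw ps) \<and>
         (\<forall>m. sqf m \<longrightarrow> m > 1 \<longrightarrow> (\<forall>p\<in>set ps. \<not> p dvd m) \<longrightarrow> sqrt (real m) \<notin> Ftw ps)"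
  using assms
proof (induction ps)
  case Nil then show ?case using sqrt_irr by simp
next
  case (Cons p ps)
  let ?F = "Ftw ps" and ?s = "sqrt (real p)"
  have IH: "\<forall>x\<in>?F. x \<noteq> 0 \<longrightarrow> inverse x \<in> ?F"
    "\<And>m. sqf m \<Longrightarrow> m > 1 \<Longrightarrow> (\<forall>p\<in>set ps. \<not> p dvd m) \<Longrightarrow> sqrt (real m) \<notin> ?F"
    using Cons by auto
  have pp: "prime p" "p \<notin> set ps" using Cons by auto
  have ss: "?s * ?s = real p" by simp
  have sp: "?s \<notin> ?F"
  proof (rule IH(2))
    show "sqf p" using prime_sqf pp by blast
    show "p > 1" using pp prime_gt_1_nat by blast
    show "\<forall>q\<in>set ps. \<not> q dvd p"
    proof (intro ballI notI)
      fix q assume "q \<in> set ps" "q dvd p"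
      then have "q = p" using Cons pp primes_dvd_imp_eq by (metis list.set_intros(2))
      then show False using \<open>q \<in> set ps\<close> pp by simp
    qed
  qed
  have part2: "sqrt (real m) \<notin> Ftw (p # ps)" if m: "sqf m" "m > 1" "\<forall>q\<in>set (p # ps). \<not> q dvd m" for m
  proof
    assume "sqrt (real m) \<in> Ftw (p # ps)"
    then obtain a b where ab: "a \<in> ?F" "b \<in> ?F" "sqrt (real m) = a + b * ?s" unfolding Ftw.simps by blast
    have "real m = sqrt (real m) * sqrt (real m)" by simp
    then have "real m = (a + b * ?s) * (a + b * ?s)" by (simp only: ab(3))
    then have mq: "real m = (a * a + real p * (b * b)) + 2 * a * b * ?s"
      by (simp add: algebra_simps)
    have mF: "sqrt (real m) \<notin> ?F" using IH(2) m by simp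
    show False
    proof (cases "b = 0")
      case True then show False using ab mF by simp
    next
      case b0: False
      show False
      proof (cases "a = 0")
        case False
        have "?s = (real m - (a * a + real p * (b * b))) * inverse (2 * a * b)"
          using mq False b0 by (simp add: field_simps)
        moreover have "inverse (2 * a * b) \<in> ?F" using IH(1) ab False b0 Ftw_mult Ftw_of_nat
          by (metis mult_eq_0_iff of_nat_numeral zero_neq_numeral)
        moreover have "real m - (a * a + real p * (b * b)) \<in> ?F"
          using ab by (intro Ftw_diff Ftw_add Ftw_mult Ftw_of_nat)
        ultimately show False using sp Ftw_mult by metis
      next
        case True
        then have "sqrt (real m) = b * ?s" using ab by simp
        then have "sqrt (real (m * p)) = b * real p" by (simp add: real_sqrt_mult)
        moreover have "b * real p \<in> ?F" using ab Ftw_mult Ftw_of_nat by blast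
        moreover have "sqrt (real (m * p)) \<notin> ?F"
        proof (rule IH(2))
          show "sqf (m * p)" using sqf_mult_prime m pp by simp
          show "m * p > 1" using m(2) prime_gt_1_nat[OF pp(1)] less_1_mult by blast
          show "\<forall>q\<in>set ps. \<not> q dvd m * p"
          proof (intro ballI notI)
            fix q assume q: "q \<in> set ps" "q dvd m * p"
            have "prime q" using Cons q by simp
            then have "q dvd m \<or> q dvd p" using q prime_dvd_mult_iff by blast
            then show False
            proof
              assume "q dvd m" then show False using m q by simp
            next
              assume "q dvd p" then have "q = p" using \<open>prime q\<close> pp primes_dvd_imp_eq by blast
              then show False using q pp by simp
            qed
          qed
        qed
        ultimately show False by simp
      qed
    qed
  qed
  have part1: "inverse x \<in> Ftw (p # ps)" if x: "x \<in> Ftw (p # ps)" "x \<noteq> 0" for x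
  proof -
    obtain a b where ab: "a \<in> ?F" "b \<in> ?F" "x = a + b * ?s" using x unfolding Ftw.simps by blast
    define D where "D = a * a - real p * (b * b)"
    have DF: "D \<in> ?F" unfolding D_def using ab by (intro Ftw_diff Ftw_mult Ftw_of_nat)
    have D0: "D \<noteq> 0"
    proof
      assume D: "D = 0"
      show False
      proof (cases "b = 0")
        case True
        then have "a = 0" using D by (simp add: D_def)
        then show False using x ab True by simp
      next
        case False
        have "(a / b) * (a / b) = real p" using D False by (simp add: D_def field_simps)
        then have "?s = sqrt ((a / b) * (a / b))" by simp
        then have "?s = \<bar>a / b\<bar>" using real_sqrt_abs2[of "a / b"] by (simp only:)
        moreover have "a / b \<in> ?F" using IH(1) ab False Ftw_mult by (simp add: divide_inverse)
        then have "\<bar>a / b\<bar> \<in> ?F"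
        proof (cases "a / b \<ge> 0")
          case True then show ?thesis using \<open>a / b \<in> ?F\<close> by (simp only: abs_of_nonneg)
        next
          case False then have "\<bar>a / b\<bar> = - (a / b)" by (simp only: abs_of_neg not_le)
          then show ?thesis using Ftw_uminus[OF \<open>a / b \<in> ?F\<close>] by (simp only:)
        qed
        ultimately show False using sp by simp
      qed
    qed
    have iD: "inverse D \<in> ?F" using IH(1) DF D0 by blast
    have "(a + b * ?s) * (a - b * ?s) = D" unfolding D_def by (simp add: algebra_simps)
    then have "x * ((a - b * ?s) * inverse D) = 1" using ab D0 by (simp add: mult.assoc[symmetric])
    then have "inverse x = (a - b * ?s) * inverse D" using x(2) by (metis inverse_unique)
    then have "inverse x = a * inverse D + (- b * inverse D) * ?s" by (simp add: algebra_simps)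
    moreover have "a * inverse D \<in> ?F" "- b * inverse D \<in> ?F" using ab iD Ftw_mult Ftw_uminus by auto
    ultimately show ?thesis using Ftw_ConsI by blast
  qed
  show ?case using part1 part2 by blast
qed



lemma sqrt_in_Ftw:
  "r > 0 \<Longrightarrow> (\<forall>p. prime p \<longrightarrow> p dvd r \<longrightarrow> p \<in> set ps) \<Longrightarrow> sqrt (real r) \<in> Ftw ps"
proof (induction r rule: less_induct)
  case (less r)
  show ?case
  proof (cases "r = 1")
    case True then show ?thesis using Ftw_Rats by simp
  next
    case False
    then obtain p where p: "prime p" "p dvd r" using prime_factor_nat by blast
    then obtain r' where r': "r = p * r'" by blast
    have "r' > 0" using less(2) r' by (cases "r' = 0") auto
    have "p > 1" using prime_gt_1_nat p by blast
    then have "r' < r" using r' \<open>r' > 0\<close> by simp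
    moreover have "\<forall>q. prime q \<longrightarrow> q dvd r' \<longrightarrow> q \<in> set ps" using less(3) r' by auto
    ultimately have "sqrt (real r') \<in> Ftw ps" using less(1) \<open>r' > 0\<close> by blast
    moreover have "sqrt (real p) \<in> Ftw ps" using Ftw_sqrt_mem less(3) p by blast
    moreover have "sqrt (real r) = sqrt (real p) * sqrt (real r')" using r' by (simp add: real_sqrt_mult)
    ultimately show ?thesis using Ftw_mult by simp
  qed
qed

lemma square_of_even_mult:
  assumes "(m::nat) > 0" "\<forall>q. prime q \<longrightarrow> even (multiplicity q m)"
  shows "\<exists>c. m = c ^ 2"
proof -
  define c where "c = (\<Prod>p\<in>prime_factors m. p ^ (multiplicity p m div 2))"
  have "c ^ 2 = (\<Prod>p\<in>prime_factors m. (p ^ (multiplicity p m div 2)) ^ 2)"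
    unfolding c_def by (rule prod_power_distrib)
  also have "\<dots> = (\<Prod>p\<in>prime_factors m. p ^ multiplicity p m)"
  proof (rule prod.cong)
    fix p assume "p \<in> prime_factors m"
    then have "prime p" by (simp add: in_prime_factors_iff)
    then have "even (multiplicity p m)" using assms(2) by blast
    then show "(p ^ (multiplicity p m div 2)) ^ 2 = p ^ multiplicity p m"
      by (simp add: power_mult[symmetric])
  qed simp
  also have "\<dots> = m" using prod_prime_factors[of m] assms(1) by simp
  finally show ?thesis by metis
qed

definition PPq :: "nat \<Rightarrow> nat list \<Rightarrow> real \<Rightarrow> bool" where
  "PPq q ps x \<longleftrightarrow> (\<exists>a b. a \<in> Ftw ps \<and> b \<in> Ftw ps \<and> a > 0 \<and> b \<ge> 0 \<and> x = a + b * sqrt (real q))"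
definition PSq :: "nat \<Rightarrow> nat list \<Rightarrow> real \<Rightarrow> bool" where
  "PSq q ps x \<longleftrightarrow> (\<exists>a b. a \<in> Ftw ps \<and> b \<in> Ftw ps \<and> a > 0 \<and> b > 0 \<and> x = a + b * sqrt (real q))"

lemma PP_mult_aux:
  assumes "x = a + b * sqrt (real q)" "y = c + e * sqrt (real q)"
  shows "x * y = (a * c + real q * (b * e)) + (a * e + b * c) * sqrt (real q)"
proof -
  have ss: "sqrt (real q) * sqrt (real q) = real q" by simp
  show ?thesis unfolding assms by (simp add: algebra_simps)
qed

lemma PP_mult: "PPq q ps x \<Longrightarrow> PPq q ps y \<Longrightarrow> PPq q ps (x * y)"
proof -
  assume "PPq q ps x" "PPq q ps y"
  then obtain a b c e where ab: "a \<in> Ftw ps" "b \<in> Ftw ps" "a > 0" "b \<ge> 0" "x = a + b * sqrt (real q)"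
    and ce: "c \<in> Ftw ps" "e \<in> Ftw ps" "c > 0" "e \<ge> 0" "y = c + e * sqrt (real q)"
    unfolding PPq_def by blast
  have "a * c + real q * (b * e) \<in> Ftw ps" "a * e + b * c \<in> Ftw ps"
    using ab ce by (auto intro!: Ftw_add Ftw_mult Ftw_of_nat)
  moreover have "a * c + real q * (b * e) > 0" using ab ce
    by (metis add_pos_nonneg mult_nonneg_nonneg mult_pos_pos of_nat_0_le_iff)
  moreover have "a * e + b * c \<ge> 0" using ab ce by simp
  ultimately show ?thesis unfolding PPq_def using PP_mult_aux[OF ab(5) ce(5)] by blast
qed

lemma PS_mult: "PSq q ps x \<Longrightarrow> PPq q ps y \<Longrightarrow> PSq q ps (x * y)"
proof -
  assume "PSq q ps x" "PPq q ps y"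
  then obtain a b c e where ab: "a \<in> Ftw ps" "b \<in> Ftw ps" "a > 0" "b > 0" "x = a + b * sqrt (real q)"
    and ce: "c \<in> Ftw ps" "e \<in> Ftw ps" "c > 0" "e \<ge> 0" "y = c + e * sqrt (real q)"
    unfolding PPq_def PSq_def by blast
  have "a * c + real q * (b * e) \<in> Ftw ps" "a * e + b * c \<in> Ftw ps"
    using ab ce by (auto intro!: Ftw_add Ftw_mult Ftw_of_nat)
  moreover have "a * c + real q * (b * e) > 0" using ab ce
    by (metis add_pos_nonneg less_imp_le mult_nonneg_nonneg mult_pos_pos of_nat_0_le_iff)
  moreover have "a * e + b * c > 0" using ab ce by (simp add: add_nonneg_pos)
  ultimately show ?thesis unfolding PSq_def using PP_mult_aux[OF ab(5) ce(5)] by blast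
qed

lemma PS_imp_PP: "PSq q ps x \<Longrightarrow> PPq q ps x"
proof -
  assume "PSq q ps x"
  then obtain a b where "a \<in> Ftw ps" "b \<in> Ftw ps" "a > 0" "b > 0" "x = a + b * sqrt (real q)"
    unfolding PSq_def by blast
  moreover have "b \<ge> 0" using \<open>b > 0\<close> by simp
  ultimately show ?thesis unfolding PPq_def by blast
qed

lemma PP_one: "PPq q ps 1"
proof -
  have "(1::real) \<in> Ftw ps" "(0::real) \<in> Ftw ps" using Ftw_Rats by auto
  moreover have "(1::real) = 1 + 0 * sqrt (real q)" by simp
  ultimately show ?thesis unfolding PPq_def by (metis less_numeral_extra(1) order_refl)
qed

lemma PP_prod: "(\<forall>x\<in>set xs. PPq q ps x) \<Longrightarrow> PPq q ps (prod_list xs)"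
  by (induction xs) (auto intro: PP_mult PP_one)

lemma PS_prod: "(\<forall>x\<in>set xs. PPq q ps x) \<Longrightarrow> (\<exists>x\<in>set xs. PSq q ps x) \<Longrightarrow> PSq q ps (prod_list xs)"
proof (induction xs)
  case Nil then show ?case by simp
next
  case (Cons x xs)
  show ?case
  proof (cases "PSq q ps x")
    case True
    then show ?thesis using PS_mult PP_prod Cons by simp
  next
    case False
    then have "PSq q ps (prod_list xs)" using Cons by auto
    then have "PSq q ps (prod_list xs * x)" using PS_mult Cons by simp
    then show ?thesis by (simp add: mult.commute)
  qed
qed

lemma all_squares:
  assumes pos: "\<forall>m\<in>set ms. m > 0"
    and rat: "prod_list (map (\<lambda>m. 1 + 1 / sqrt (real m)) ms) \<in> \<rat>"
  shows "\<forall>m\<in>set ms. \<exists>c. m = c ^ 2"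
proof (rule ccontr)
  assume "\<not> (\<forall>m\<in>set ms. \<exists>c. m = c ^ 2)"
  then obtain m0 where m0: "m0 \<in> set ms" "\<not> (\<exists>c. m0 = c ^ 2)" by blast
  then obtain q where q: "prime q" "odd (multiplicity q m0)"
    using square_of_even_mult[of m0] pos by blast
  define M where "M = prod_list ms"
  have M0: "M > 0" unfolding M_def using pos by (induction ms) auto
  define S where "S = {p. prime p \<and> p dvd M \<and> p \<noteq> q}"
  have finS: "finite S" unfolding S_def
    by (rule finite_subset[of _ "{..M}"]) (auto simp: M0 dvd_imp_le)
  define ps where "ps = sorted_list_of_set S"
  have ps: "set ps = S" "distinct ps" using finS by (auto simp: ps_def)
  have psp: "\<forall>p\<in>set ps. prime p" using ps by (auto simp: S_def)
  note FF = Ftw_field[OF ps(2) psp]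
  have qnot: "q \<notin> set ps" using ps by (auto simp: S_def)
  have qnu: "\<not> is_unit q" using prime_gt_1_nat[OF q(1)] by simp
  have qpos: "real q > 0" using prime_gt_0_nat[OF q(1)] by simp
  have key: "PPq q ps (1 + 1 / sqrt (real m)) \<and> (odd (multiplicity q m) \<longrightarrow> PSq q ps (1 + 1 / sqrt (real m)))"
    if m: "m \<in> set ms" for m
  proof -
    have m0: "m \<noteq> 0" using pos m by auto
    define e where "e = multiplicity q m"
    obtain r where r: "m = q ^ e * r" "\<not> q dvd r" using multiplicity_decompose'[OF m0 qnu] e_def by blast
    have r0: "r > 0" using r m0 by (cases "r = 0") auto
    have "\<forall>p. prime p \<longrightarrow> p dvd r \<longrightarrow> p \<in> set ps"
    proof (intro allI impI)
      fix p assume p: "prime p" "p dvd r"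
      have "m dvd M" unfolding M_def using m by (rule prod_list_dvd)
      moreover have "p dvd m" using p(2) r(1) by (simp add: dvd_mult)
      ultimately have "p dvd M" using dvd_trans by blast
      moreover have "p \<noteq> q" using p r by auto
      ultimately show "p \<in> set ps" using p ps by (auto simp: S_def)
    qed
    then have sr: "sqrt (real r) \<in> Ftw ps" using sqrt_in_Ftw r0 by blast
    have srp: "sqrt (real r) > 0" using r0 by simp
    have sm: "sqrt (real m) = sqrt (real q ^ e) * sqrt (real r)" using r by (simp add: real_sqrt_mult)
    show ?thesis
    proof (cases "even e")
      case True
      then obtain h where h: "e = 2 * h" by blast
      have "real q ^ e = (real q ^ h) ^ 2" unfolding h by (metis power_mult mult.commute)
      then have "sqrt (real q ^ e) = real q ^ h" by (simp add: real_sqrt_abs)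
      then have smv: "sqrt (real m) = real q ^ h * sqrt (real r)" using sm by simp
      define a where "a = 1 + inverse (real q ^ h * sqrt (real r))"
      have "real q ^ h * sqrt (real r) \<in> Ftw ps" using sr by (intro Ftw_mult Ftw_power Ftw_of_nat)
      moreover have "real q ^ h * sqrt (real r) \<noteq> 0" using srp qpos by simp
      ultimately have "inverse (real q ^ h * sqrt (real r)) \<in> Ftw ps" using FF by blast
      then have aF: "a \<in> Ftw ps" unfolding a_def using Ftw_add Ftw_Rats by simp
      have apos: "a > 0" unfolding a_def using srp qpos by (simp add: add_pos_nonneg)
      have "1 + 1 / sqrt (real m) = a + 0 * sqrt (real q)" unfolding a_def smv by (simp add: divide_inverse)
      then have "PPq q ps (1 + 1 / sqrt (real m))" unfolding PPq_def using aF apos Ftw_Rats[of 0]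
        by (metis Rats_0 order_refl)
      then show ?thesis using True e_def by simp
    next
      case False
      then obtain h where h: "e = 2 * h + 1" by (metis oddE)
      have sq: "sqrt (real q) * sqrt (real q) = real q" by simp
      have "real q ^ e = (real q ^ h) ^ 2 * real q" unfolding h
        by (metis power_add power_mult mult.commute power_one_right)
      then have "sqrt (real q ^ e) = real q ^ h * sqrt (real q)"
        by (simp add: real_sqrt_mult real_sqrt_abs)
      then have smv: "sqrt (real m) = real q ^ h * sqrt (real q) * sqrt (real r)" using sm by simp
      define b where "b = inverse (real q ^ (h + 1) * sqrt (real r))"
      have "real q ^ (h + 1) * sqrt (real r) \<in> Ftw ps" using sr by (intro Ftw_mult Ftw_power Ftw_of_nat)
      moreover have "real q ^ (h + 1) * sqrt (real r) \<noteq> 0" using srp qpos by simp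
      ultimately have bF: "b \<in> Ftw ps" using FF unfolding b_def by blast
      have bpos: "b > 0" unfolding b_def using srp qpos by simp
      have "1 / sqrt (real m) = b * sqrt (real q)"
      proof -
        have "sqrt (real q) > 0" using qpos by simp
        then show ?thesis unfolding b_def smv using srp qpos sq
          by (simp add: field_simps power_add)
      qed
      then have "1 + 1 / sqrt (real m) = 1 + b * sqrt (real q)" by simp
      then have "PSq q ps (1 + 1 / sqrt (real m))" unfolding PSq_def using bF bpos Ftw_Rats[of 1]
        by (metis Rats_1 zero_less_one)
      then show ?thesis using PS_imp_PP by blast
    qed
  qed
  let ?xs = "map (\<lambda>m. 1 + 1 / sqrt (real m)) ms"
  have "PSq q ps (prod_list ?xs)"
  proof (rule PS_prod)
    show "\<forall>x\<in>set ?xs. PPq q ps x" using key by auto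
    show "\<exists>x\<in>set ?xs. PSq q ps x" using key[OF m0(1)] q(2) m0(1) by auto
  qed
  then obtain A B where AB: "A \<in> Ftw ps" "B \<in> Ftw ps" "B > 0" "prod_list ?xs = A + B * sqrt (real q)"
    unfolding PSq_def by blast
  have "prod_list ?xs \<in> Ftw ps" using rat Ftw_Rats by blast
  then have "(prod_list ?xs - A) * inverse B \<in> Ftw ps" using AB FF by (intro Ftw_mult Ftw_diff) auto
  moreover have "(prod_list ?xs - A) * inverse B = sqrt (real q)" using AB by simp
  ultimately have "sqrt (real q) \<in> Ftw ps" by simp
  moreover have "sqrt (real q) \<notin> Ftw ps"
  proof -
    have "\<forall>p\<in>set ps. \<not> p dvd q"
    proof (intro ballI notI)
      fix p assume "p \<in> set ps" "p dvd q"
      then have "p = q" using psp q(1) primes_dvd_imp_eq by blast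
      then show False using qnot \<open>p \<in> set ps\<close> by simp
    qed
    then show ?thesis using FF prime_sqf[OF q(1)] prime_gt_1_nat[OF q(1)] by blast
  qed
  ultimately show False by simp
qed

lemma final_arith:
  assumes "ms \<noteq> []" "\<forall>m\<in>set ms. odd m \<and> m \<ge> 2" "n \<in> {1, 2::int}"
    and "prod_list (map (\<lambda>m. 1 + inverse (sqrt (real m) powi n)) ms) = real t"
  shows False
proof (cases "n = 2")
  case True
  have "(\<lambda>m. 1 + inverse (sqrt (real m) powi n)) = (\<lambda>m. 1 + 1 / real m)"
  proof
    fix m :: nat
    have "sqrt (real m) powi n = sqrt (real m) ^ 2" using True power_int_of_nat[of "sqrt (real m)" 2] by simp
    then show "1 + inverse (sqrt (real m) powi n) = 1 + 1 / real m" by (simp add: divide_inverse)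
  qed
  then show False using two_adic[OF assms(1,2)] assms(4) by simp
next
  case False
  then have n1: "n = 1" using assms(3) by simp
  have e1: "(\<lambda>m. 1 + inverse (sqrt (real m) powi n)) = (\<lambda>m. 1 + 1 / sqrt (real m))"
    using n1 by (simp add: divide_inverse)
  have "\<forall>m\<in>set ms. \<exists>c. m = c ^ 2"
    using all_squares[of ms] assms(2,4) e1 by (metis Rats_of_nat not_numeral_le_zero neq0_conv)
  define csq where "csq m = (SOME c. m = c ^ 2)" for m :: nat
  have csq: "m = csq m ^ 2" if "m \<in> set ms" for m
    unfolding csq_def using \<open>\<forall>m\<in>set ms. \<exists>c. m = c ^ 2\<close> that by (metis (mono_tags) someI_ex)
  have meq: "map (\<lambda>m. 1 + 1 / sqrt (real m)) ms = map (\<lambda>c. 1 + 1 / real c) (map csq ms)"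
  proof -
    have "1 + 1 / sqrt (real m) = 1 + 1 / real (csq m)" if "m \<in> set ms" for m
    proof -
      have "sqrt (real m) = sqrt (real (csq m) ^ 2)" using csq[OF that] by (metis of_nat_power)
      then show ?thesis by (simp add: real_sqrt_abs)
    qed
    then show ?thesis by simp
  qed
  have "\<forall>c\<in>set (map csq ms). odd c \<and> c \<ge> 2"
  proof
    fix c assume "c \<in> set (map csq ms)"
    then obtain m where m: "m \<in> set ms" "c = csq m" by auto
    have "m = c ^ 2" using csq m by simp
    moreover have "odd m" "m \<ge> 2" using assms(2) m by auto
    ultimately have "odd c" by simp
    moreover have "c \<ge> 2"
    proof (rule ccontr)
      assume "\<not> c \<ge> 2" then have "c \<le> 1" by simp
      then have "c = 0 \<or> c = 1" by auto
      then have "c ^ 2 \<le> 1" by auto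
      then show False using \<open>m = c ^ 2\<close> \<open>m \<ge> 2\<close> by simp
    qed
    ultimately show "odd c \<and> c \<ge> 2" by simp
  qed
  moreover have "map csq ms \<noteq> []" using assms(1) by simp
  moreover have "prod_list (map (\<lambda>c. 1 + 1 / real c) (map csq ms)) = real t"
    using assms(4) unfolding e1 meq .
  ultimately show False using two_adic[of "map csq ms" t] by blast
qed



lemma cis_pow: "cis a ^ n = cis (real n * a)"
  by (induction n) (auto simp: cis_mult algebra_simps)

lemma cis_periodic: "cis (t + 2 * pi) = cis t"
  by (metis cis_2pi cis_mult mult_1_right)

lemma arg02pi_range: "0 \<le> arg02pi x \<and> arg02pi x < 2 * pi"
  using Arg_bounded[of x] by (auto simp: arg02pi_def)

lemma arg02pi_rcis:
  assumes "r > 0" "0 \<le> phi" "phi < 2 * pi"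
  shows "arg02pi (rcis r phi) = phi"
proof (cases "phi \<le> pi")
  case True
  then have "Arg (rcis r phi) = phi" using assms Arg_rcis[of phi r] by simp
  then show ?thesis using assms by (simp add: arg02pi_def)
next
  case False
  have "rcis r phi = rcis r (phi - 2 * pi)"
    unfolding rcis_def using cis_periodic[of "phi - 2 * pi"] by simp
  moreover have "Arg (rcis r (phi - 2 * pi)) = phi - 2 * pi" using assms False Arg_rcis[of "phi - 2*pi" r] by simp
  ultimately show ?thesis using False assms by (simp add: arg02pi_def)
qed

lemma rcis_arg02pi: "rcis (cmod x) (arg02pi x) = x"
proof (cases "Arg x < 0")
  case True
  then have "rcis (cmod x) (arg02pi x) = rcis (cmod x) (Arg x)"
    unfolding arg02pi_def rcis_def using cis_periodic[of "Arg x"] by simp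
  then show ?thesis using rcis_cmod_Arg by simp
next
  case False then show ?thesis using rcis_cmod_Arg by (simp add: arg02pi_def)
qed

lemma arg02pi_mult_cis:
  assumes "x \<noteq> 0" "0 \<le> a" "a < 2 * pi"
  shows "arg02pi (cis a * x) = (if arg02pi x + a < 2 * pi then arg02pi x + a else arg02pi x + a - 2 * pi)"
proof -
  let ?t = "arg02pi x"
  have r: "cmod x > 0" using assms by simp
  have "cis a * x = rcis (cmod x) (?t + a)"
    using rcis_arg02pi[of x] unfolding rcis_def by (metis cis_mult mult.left_commute add.commute)
  moreover have e2: "rcis (cmod x) (?t + a) = rcis (cmod x) (?t + a - 2 * pi)"
    unfolding rcis_def using cis_periodic[of "?t + a - 2 * pi"] by simp
  note e = calculation
  have t: "0 \<le> ?t" "?t < 2 * pi" using arg02pi_range[of x] by auto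
  show ?thesis
  proof (cases "?t + a < 2 * pi")
    case True then show ?thesis using e(1) arg02pi_rcis[OF r, of "?t + a"] t assms by simp
  next
    case False
    then have "arg02pi (rcis (cmod x) (?t + a - 2 * pi)) = ?t + a - 2 * pi"
      using arg02pi_rcis[OF r, of "?t + a - 2 * pi"] t assms by simp
    then show ?thesis using e e2 False by simp
  qed
qed

lemma norm_generic:
  fixes w :: nat and beta :: real and U :: "complex \<Rightarrow> bool" and Aset :: "complex set"
  assumes w: "w \<ge> 1" and wb: "real w * beta = 2 * pi"
    and U: "\<And>u. U u \<longleftrightarrow> (\<exists>k<w. u = cis (real k * beta))"
    and Aset: "\<And>x. x \<in> Aset \<longleftrightarrow> x \<in> R \<and> x \<noteq> 0 \<and> arg02pi x < beta"
    and Rmult: "\<And>u x. U u \<Longrightarrow> x \<in> R \<Longrightarrow> u * x \<in> R"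
  shows "\<And>x. x \<in> R \<Longrightarrow> x \<noteq> 0 \<Longrightarrow> \<exists>u. U u \<and> u * x \<in> Aset"
    and "\<And>x u. x \<in> Aset \<Longrightarrow> U u \<Longrightarrow> u * x \<in> Aset \<Longrightarrow> u = 1"
proof -
  have bpos: "beta > 0" using wb w by (metis less_le_not_le mult_eq_0_iff nat_le_real_less of_nat_0_le_iff of_nat_1 pi_gt_zero times_divide_eq_right zero_less_mult_iff pos_divide_less_eq zero_less_numeral) 
  fix x assume x: "x \<in> R" "x \<noteq> 0"
  let ?t = "arg02pi x"
  define j where "j = nat \<lfloor>?t / beta\<rfloor>"
  have t: "0 \<le> ?t" "?t < 2 * pi" using arg02pi_range by auto
  have jle: "real j * beta \<le> ?t"
  proof -
    have "real j = of_int \<lfloor>?t / beta\<rfloor>" using t bpos by (simp add: j_def)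
    also have "\<dots> \<le> ?t / beta" by simp
    finally show ?thesis using bpos by (simp add: field_simps)
  qed
  have jlt: "?t < real j * beta + beta"
  proof -
    have "real j = of_int \<lfloor>?t / beta\<rfloor>" using t bpos by (simp add: j_def)
    moreover have "?t / beta < of_int \<lfloor>?t / beta\<rfloor> + 1" by linarith
    ultimately show ?thesis using bpos by (simp add: field_simps)
  qed
  have jw: "j < w"
  proof -
    have "real j * beta < real w * beta" using jle t wb by simp
    then show ?thesis using bpos by simp
  qed
  show "\<exists>u. U u \<and> u * x \<in> Aset"
  proof (cases "j = 0")
    case True
    have "U 1" using U w by (metis cis_zero mult_zero_left of_nat_0 zero_less_one order_less_le_trans)
    moreover have "1 * x \<in> Aset" using Aset x True jlt by simp
    ultimately show ?thesis by blast
  next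
    case False
    define k where "k = w - j"
    have k1: "k < w" using False jw by (simp add: k_def)
    have k: "k < w" "0 \<le> real k * beta" "real k * beta < 2 * pi"
    proof -
      show "k < w" by fact
      show "0 \<le> real k * beta" using bpos by simp
      have "real k * beta < real w * beta" using k1 bpos by simp
      then show "real k * beta < 2 * pi" using wb by simp
    qed
    have "real k * beta = 2 * pi - real j * beta" using jw wb by (simp add: k_def of_nat_diff algebra_simps)
    then have "arg02pi (cis (real k * beta) * x) = ?t - real j * beta"
      using arg02pi_mult_cis[OF x(2) k(2,3)] jle by auto
    then have "arg02pi (cis (real k * beta) * x) < beta" using jlt by simp
    moreover have "U (cis (real k * beta))" using U k(1) by blast
    moreover have "cis (real k * beta) * x \<noteq> 0" using x by simp
    ultimately show ?thesis using Aset Rmult x by blast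
  qed
next
  have bpos: "beta > 0" using wb w by (metis less_le_not_le mult_eq_0_iff nat_le_real_less of_nat_0_le_iff of_nat_1 pi_gt_zero times_divide_eq_right zero_less_mult_iff pos_divide_less_eq zero_less_numeral) 
  fix x u assume h: "x \<in> Aset" "U u" "u * x \<in> Aset"
  obtain k where k: "k < w" "u = cis (real k * beta)" using U h(2) by blast
  have x: "x \<noteq> 0" "arg02pi x < beta" using Aset h(1) by auto
  have ux: "arg02pi (u * x) < beta" using Aset h(3) by auto
  have t: "0 \<le> arg02pi x" using arg02pi_range by auto
  show "u = 1"
  proof (cases "k = 0")
    case True then show ?thesis using k by simp
  next
    case False
    have kb: "0 \<le> real k * beta" "real k * beta < 2 * pi" "beta \<le> real k * beta"
    proof -
      show "0 \<le> real k * beta" using bpos by simp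
      have "real k * beta < real w * beta" using k(1) bpos by simp
      then show "real k * beta < 2 * pi" using wb by simp
      have "1 \<le> real k" using False by simp
      then show "beta \<le> real k * beta" using bpos by (simp add: mult_right_mono)
    qed
    have "real (k + 1) \<le> real w" using k(1) by simp
    then have "real (k + 1) * beta \<le> real w * beta" using bpos by (intro mult_right_mono) auto
    then have "real k * beta + beta \<le> 2 * pi" using wb by (simp add: distrib_right)
    then show ?thesis using arg02pi_mult_cis[OF x(1) kb(1,2)] ux k(2) kb(3) t x(2)
      by (auto split: if_splits)
  qed
qed



lemma int_sq_ge1: "(b::int) \<noteq> 0 \<Longrightarrow> 1 \<le> b * b"
  by (metis int_one_le_iff_zero_less not_square_less_zero mult_eq_0_iff order_less_le zero_le_square)

lemma int_sq_le1: "(b::int) * b \<le> 1 \<Longrightarrow> b = -1 \<or> b = 0 \<or> b = 1"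
proof -
  assume "b * b \<le> 1"
  then have "\<bar>b\<bar> \<le> 1" using abs_square_le_1[of b] by (simp add: power2_eq_square)
  then show ?thesis by auto
qed

context qring begin

lemma unit_coords:
  assumes "unitO d u"
  shows "\<exists>a b. u = of_int a + of_int b * omega d \<and> a * a + trw d * a * b + nmw d * (b * b) = 1"
proof -
  have uO: "u \<in> OK d" "inorm u = 1" using assms by (auto simp: unitO_iff)
  obtain a b where ab: "u = of_int a + of_int b * omega d" using uO by (auto simp: OK_iff)
  have "(of_int (a^2 + trw d * a * b + nmw d * b^2) :: complex) = of_nat (inorm u)"
    using norm_form[OF ab] inorm_OK(1)[OF uO(1)] by simp
  then have "a^2 + trw d * a * b + nmw d * b^2 = 1" using uO(2) by (metis of_int_eq_1_iff of_nat_1)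
  then show ?thesis using ab by (auto simp: power2_eq_square)
qed

lemma coords_unit:
  assumes "a * a + trw d * a * b + nmw d * (b * b) = 1"
  shows "unitO d (of_int a + of_int b * omega d)"
proof -
  let ?u = "of_int a + of_int b * omega d"
  have "?u \<in> OK d" by (rule OK_intro)
  moreover have "(of_nat (inorm ?u) :: complex) = of_int 1"
    using norm_form[of ?u a b] inorm_OK(1)[OF calculation] assms by (simp add: power2_eq_square)
  then have "inorm ?u = 1" by (metis of_int_1 of_nat_1 of_nat_eq_iff)
  ultimately show ?thesis by (simp add: unitO_iff)
qed

lemma units_pm1:
  assumes "nmw d \<ge> 2" "trw d = 0 \<or> trw d = 1"
  shows "unitO d u \<longleftrightarrow> u = 1 \<or> u = -1"
proof
  assume "unitO d u"
  then obtain a b where ab: "u = of_int a + of_int b * omega d" "a * a + trw d * a * b + nmw d * (b * b) = 1"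
    using unit_coords by blast
  have "b = 0"
  proof (rule ccontr)
    assume b0: "b \<noteq> 0"
    have bb: "1 \<le> b * b" using int_sq_ge1[OF b0] .
    have nb: "2 * (b * b) \<le> nmw d * (b * b)" using assms(1) bb by (intro mult_right_mono) auto
    show False using assms(2)
    proof
      assume "trw d = 0"
      then have "a * a + nmw d * (b * b) = 1" using ab by simp
      moreover have "0 \<le> a * a" by simp
      ultimately show False using nb bb by linarith
    next
      assume "trw d = 1"
      then have "4 * (a * a + a * b + nmw d * (b * b)) = 4" using ab by simp
      then have "(2 * a + b) * (2 * a + b) + (4 * nmw d - 1) * (b * b) = 4" by (simp add: algebra_simps)
      moreover have "0 \<le> (2 * a + b) * (2 * a + b)" by simp
      ultimately show False using nb bb by (simp add: algebra_simps)
    qed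
  qed
  then have "a * a = 1" using ab by simp
  then have "a = 1 \<or> a = -1" using int_sq_le1[of a] by auto
  then show "u = 1 \<or> u = -1" using ab \<open>b = 0\<close> by auto
next
  assume "u = 1 \<or> u = -1"
  then show "unitO d u"
  proof
    assume "u = 1" then show ?thesis using unitO_1 by simp
  next
    assume "u = -1"
    have "(-1::int) * -1 + trw d * -1 * 0 + nmw d * (0 * 0) = 1" by simp
    then show ?thesis using coords_unit[of "-1" 0] \<open>u = -1\<close> by simp
  qed
qed

lemma A_iff_bnd: "x \<in> A d \<longleftrightarrow> x \<in> OK d \<and> x \<noteq> 0 \<and> arg02pi x < (if d = -1 then pi / 2 else if d = -3 then pi / 3 else pi)"
  using arg02pi_range[of x] by (auto simp: A_def)

end

lemma norm_from_units:
  assumes q: "qring d" and w: "w \<ge> 1" "real w * beta = 2 * pi"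
    and bnd: "(if d = -1 then pi / 2 else if d = -3 then pi / 3 else pi) = beta"
    and U: "\<And>u. unitO d u \<longleftrightarrow> (\<exists>k<w. u = cis (real k * beta))"
  shows "\<And>x. x \<in> OK d \<Longrightarrow> x \<noteq> 0 \<Longrightarrow> \<exists>u. unitO d u \<and> u * x \<in> A d"
    and "\<And>x u. x \<in> A d \<Longrightarrow> unitO d u \<Longrightarrow> u * x \<in> A d \<Longrightarrow> u = 1"
proof -
  interpret qring d by (rule q)
  have Aset: "\<And>x. x \<in> A d \<longleftrightarrow> x \<in> OK d \<and> x \<noteq> 0 \<and> arg02pi x < beta"
    using A_iff_bnd bnd by simp
  have Rm: "\<And>u x. unitO d u \<Longrightarrow> x \<in> OK d \<Longrightarrow> u * x \<in> OK d" using unitO_OK OK_mult by blast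
  note G = norm_generic[of w beta "unitO d" "A d" "OK d", OF w U Aset Rm]
  show "\<And>x. x \<in> OK d \<Longrightarrow> x \<noteq> 0 \<Longrightarrow> \<exists>u. unitO d u \<and> u * x \<in> A d" using G(1) by blast
  show "\<And>x u. x \<in> A d \<Longrightarrow> unitO d u \<Longrightarrow> u * x \<in> A d \<Longrightarrow> u = 1" using G(2) by blast
qed

lemma cis_k_pi: "(\<exists>k<2. u = cis (real k * pi)) \<longleftrightarrow> u = 1 \<or> u = -1"
proof -
  have "(\<exists>k<(2::nat). u = cis (real k * pi)) \<longleftrightarrow> u = cis (real 0 * pi) \<or> u = cis (real 1 * pi)"
    by (auto simp: less_2_cases_iff)
  then show ?thesis by simp
qed

lemma norm_pm1:
  assumes "qring d" "nmw d \<ge> 2" "trw d = 0 \<or> trw d = 1" "d \<noteq> -1" "d \<noteq> -3"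
  shows "\<And>x. x \<in> OK d \<Longrightarrow> x \<noteq> 0 \<Longrightarrow> \<exists>u. unitO d u \<and> u * x \<in> A d"
    and "\<And>x u. x \<in> A d \<Longrightarrow> unitO d u \<Longrightarrow> u * x \<in> A d \<Longrightarrow> u = 1"
proof -
  have U: "\<And>u. unitO d u \<longleftrightarrow> (\<exists>k<2. u = cis (real k * pi))"
    using qring.units_pm1[OF assms(1-3)] cis_k_pi by simp
  note N = norm_from_units[OF assms(1), of 2 pi, OF _ _ _ U]
  show "\<And>x. x \<in> OK d \<Longrightarrow> x \<noteq> 0 \<Longrightarrow> \<exists>u. unitO d u \<and> u * x \<in> A d" using N(1) assms(4,5) by simp
  show "\<And>x u. x \<in> A d \<Longrightarrow> unitO d u \<Longrightarrow> u * x \<in> A d \<Longrightarrow> u = 1" using N(2) assms(4,5) by simp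
qed



lemma ex_less4: "(\<exists>k<(4::nat). P k) \<longleftrightarrow> P 0 \<or> P 1 \<or> P 2 \<or> P 3"
  by (auto simp: eval_nat_numeral less_Suc_eq)

lemma ex_less6: "(\<exists>k<(6::nat). P k) \<longleftrightarrow> P 0 \<or> P 1 \<or> P 2 \<or> P 3 \<or> P 4 \<or> P 5"
  by (auto simp: eval_nat_numeral less_Suc_eq)

lemma cis_k_pow: "(\<exists>k<w. u = cis (real k * beta)) \<longleftrightarrow> (\<exists>k<w. u = cis beta ^ k)"
  by (simp add: cis_pow)

lemma omega_m1: "omega (-1) = \<i>"
  by (simp add: omega_def csqrt_int_def)

lemma units_m1: "unitO (-1) u \<longleftrightarrow> (\<exists>k<4. u = cis (real k * (pi / 2)))"
proof -
  interpret qring "-1" by unfold_locales simp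
  have tn: "trw (-1) = 0" "nmw (-1) = 1" by (simp_all add: trw_def nmw_def)
  have "unitO (-1) u \<longleftrightarrow> u = 1 \<or> u = \<i> \<or> u = -1 \<or> u = - \<i>"
  proof
    assume "unitO (-1) u"
    then obtain a b where ab: "u = of_int a + of_int b * \<i>" "a * a + b * b = 1"
      using unit_coords tn omega_m1 by force
    have "a * a \<le> 1" "b * b \<le> 1" using ab(2) zero_le_square[of b] zero_le_square[of a] by linarith+
    then have "a = -1 \<or> a = 0 \<or> a = 1" "b = -1 \<or> b = 0 \<or> b = 1" using int_sq_le1 by auto
    then show "u = 1 \<or> u = \<i> \<or> u = -1 \<or> u = - \<i>" using ab by auto
  next
    assume h: "u = 1 \<or> u = \<i> \<or> u = -1 \<or> u = - \<i>"
    have c: "unitO (-1) (of_int a + of_int b * \<i>)" if "a * a + b * b = 1" for a b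
      using coords_unit[of a b] tn omega_m1 that by simp
    show "unitO (-1) u" using h c[of 1 0] c[of 0 1] c[of "-1" 0] c[of 0 "-1"] by auto
  qed
  moreover have "(\<exists>k<4. u = cis (real k * (pi / 2))) \<longleftrightarrow> u = 1 \<or> u = \<i> \<or> u = -1 \<or> u = - \<i>"
    unfolding cis_k_pow ex_less4 by (simp add: cis_pi_half power3_eq_cube)
  ultimately show ?thesis by simp
qed

lemma omega_m3: "omega (-3) = cis (pi / 3)"
proof -
  have "omega (-3) = (1 + \<i> * of_real (sqrt 3)) / 2" by (simp add: omega_def csqrt_int_def)
  then show ?thesis by (simp add: complex_eq_iff cis.sel cos_60 sin_60)
qed

lemma units_m3: "unitO (-3) u \<longleftrightarrow> (\<exists>k<6. u = cis (real k * (pi / 3)))"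
proof -
  interpret qring "-3" by unfold_locales simp
  have tn: "trw (-3) = 1" "nmw (-3) = 1" by (simp_all add: trw_def nmw_def)
  let ?w = "omega (-3)"
  have w2: "?w ^ 2 = ?w - 1" using w_sq tn by (simp add: power2_eq_square)
  have p3: "?w ^ 3 = ?w ^ 2 * ?w" "?w ^ 4 = ?w ^ 3 * ?w" "?w ^ 5 = ?w ^ 4 * ?w"
    by (simp_all add: eval_nat_numeral)
  have w3: "?w ^ 3 = -1"
  proof -
    have "?w ^ 3 = (?w - 1) * ?w" using p3 w2 by simp
    also have "\<dots> = ?w ^ 2 - ?w" by (simp add: algebra_simps power2_eq_square)
    also have "\<dots> = -1" using w2 by simp
    finally show ?thesis .
  qed
  have w4: "?w ^ 4 = - ?w"
  proof -
    have "?w ^ 4 = ?w ^ 3 * ?w" by (rule p3(2))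
    then show ?thesis using w3 by simp
  qed
  have w5: "?w ^ 5 = 1 - ?w"
  proof -
    have "?w ^ 5 = ?w ^ 4 * ?w" by (rule p3(3))
    then have "?w ^ 5 = - (?w ^ 2)" using w4 by (simp add: power2_eq_square)
    then show ?thesis using w2 by simp
  qed
  have "unitO (-3) u \<longleftrightarrow> u = 1 \<or> u = ?w \<or> u = ?w - 1 \<or> u = -1 \<or> u = - ?w \<or> u = 1 - ?w"
  proof
    assume "unitO (-3) u"
    then obtain a b where ab: "u = of_int a + of_int b * ?w" "a * a + a * b + b * b = 1"
      using unit_coords tn by force
    have e1: "(2 * a + b) * (2 * a + b) + 3 * (b * b) = 4" using ab(2) by (simp add: algebra_simps)
    have e2: "(2 * b + a) * (2 * b + a) + 3 * (a * a) = 4" using ab(2) by (simp add: algebra_simps)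
    have "3 * (b * b) \<le> 4" "3 * (a * a) \<le> 4" using e1 e2 zero_le_square[of "2*a+b"] zero_le_square[of "2*b+a"]
      by linarith+
    then have "a * a \<le> 1" "b * b \<le> 1" by simp_all
    then have "a = -1 \<or> a = 0 \<or> a = 1" "b = -1 \<or> b = 0 \<or> b = 1" using int_sq_le1 by auto
    then show "u = 1 \<or> u = ?w \<or> u = ?w - 1 \<or> u = -1 \<or> u = - ?w \<or> u = 1 - ?w"
      using ab by (auto simp: algebra_simps)
  next
    assume h: "u = 1 \<or> u = ?w \<or> u = ?w - 1 \<or> u = -1 \<or> u = - ?w \<or> u = 1 - ?w"
    have c: "unitO (-3) (of_int a + of_int b * ?w)" if "a * a + a * b + b * b = 1" for a b
      using coords_unit[of a b] tn that by simp
    have e: "of_int 1 + of_int 0 * ?w = 1" "of_int 0 + of_int 1 * ?w = ?w"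
      "of_int (-1) + of_int 1 * ?w = ?w - 1" "of_int (-1) + of_int 0 * ?w = -1"
      "of_int 0 + of_int (-1) * ?w = - ?w" "of_int 1 + of_int (-1) * ?w = 1 - ?w" by simp_all
    have "unitO (-3) 1" "unitO (-3) ?w" "unitO (-3) (?w - 1)" "unitO (-3) (-1)" "unitO (-3) (- ?w)" "unitO (-3) (1 - ?w)"
      using c[of 1 0] c[of 0 1] c[of "-1" 1] c[of "-1" 0] c[of 0 "-1"] c[of 1 "-1"] e
      by (simp only: mult_1 mult_zero_left mult_zero_right add_0 diff_0 ; simp)+
    then show "unitO (-3) u" using h by blast
  qed
  moreover have "(\<exists>k<6. u = cis (real k * (pi / 3))) \<longleftrightarrow> u = 1 \<or> u = ?w \<or> u = ?w - 1 \<or> u = -1 \<or> u = - ?w \<or> u = 1 - ?w"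
    unfolding cis_k_pow ex_less6 omega_m3[symmetric] using w2 w3 w4 w5 by auto
  ultimately show ?thesis by simp
qed



context qring begin

lemma approx_point:
  assumes "\<bar>real k * (Im qq / Im (omega d)) - of_int b\<bar> \<le> delta"
  shows "\<exists>a::int. (cmod (of_nat k * qq - (of_int a + of_int b * omega d)))^2 \<le> 1/4 + (delta * Im (omega d))^2"
proof -
  define z where "z = of_nat k * qq - of_int b * omega d"
  have iw: "Im (omega d) > 0" using Im_w_pos .
  have imz: "Im z = (real k * (Im qq / Im (omega d)) - of_int b) * Im (omega d)"
    unfolding z_def using iw by (simp add: field_simps)
  have "\<bar>Im z\<bar> \<le> delta * Im (omega d)"
    unfolding imz abs_mult using assms iw by (simp add: mult_right_mono)
  then have i2: "(Im z)^2 \<le> (delta * Im (omega d))^2"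
    by (metis abs_ge_zero power2_abs power_mono)
  define a where "a = \<lfloor>Re z + 1/2\<rfloor>"
  have "of_int a \<le> Re z + 1/2" "Re z + 1/2 < of_int a + 1" unfolding a_def by linarith+
  then have "\<bar>Re z - of_int a\<bar> \<le> 1/2" unfolding abs_le_iff by linarith
  then have "(Re z - of_int a)^2 \<le> (1/2)^2" by (metis abs_ge_zero power2_abs power_mono)
  then have r2: "(Re z - of_int a)^2 \<le> 1/4" by (simp add: power_divide)
  have e: "of_nat k * qq - (of_int a + of_int b * omega d) = z - of_int a" unfolding z_def by simp
  have cm: "(cmod (z - of_int a))^2 = (Re z - of_int a)^2 + (Im z)^2"
    by (simp add: cmod_power2)
  have "(cmod (of_nat k * qq - (of_int a + of_int b * omega d)))^2 = (Re z - of_int a)^2 + (Im z)^2"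
    unfolding e by (rule cm)
  then have "(cmod (of_nat k * qq - (of_int a + of_int b * omega d)))^2 \<le> 1/4 + (delta * Im (omega d))^2"
    using r2 i2 by linarith
  then show ?thesis by blast
qed

lemma DH_generic:
  assumes approxY: "\<And>Y::real. \<exists>k::nat. 1 \<le> k \<and> k \<le> K \<and> (\<exists>b::int. \<bar>real k * Y - of_int b\<bar> \<le> delta)"
    and geo: "1/4 + (delta * Im (omega d))^2 < 1"
    and inert: "\<And>p \<beta>. prime p \<Longrightarrow> p \<le> K \<Longrightarrow> \<beta> \<in> OK d \<Longrightarrow> \<beta> / of_nat p \<notin> OK d \<Longrightarrow>
                   \<exists>\<beta>'\<in>OK d. \<exists>\<mu>\<in>OK d. \<beta> * \<beta>' = 1 + of_nat p * \<mu>"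
    and x: "x \<in> OK d" "g \<in> OK d" "g \<noteq> 0" "\<not> dvdO d g x"
  shows "\<exists>s\<in>OK d. \<exists>\<gamma>\<in>OK d. 0 < cmod (s * x - \<gamma> * g) \<and> cmod (s * x - \<gamma> * g) < cmod g"
proof -
  define q where "q = x / g"
  have qO: "q \<notin> OK d" using dvdO_iff_div[OF x(2,3)] x(4) q_def by simp
  have xq: "x = g * q" using x(3) q_def by simp
  obtain k b where kb: "1 \<le> k" "k \<le> K" "\<bar>real k * (Im q / Im (omega d)) - of_int b\<bar> \<le> delta"
    using approxY by blast
  obtain a where a: "(cmod (of_nat k * q - (of_int a + of_int b * omega d)))^2 \<le> 1/4 + (delta * Im (omega d))^2"
    using approx_point[OF kb(3)] by blast
  define \<gamma> where "\<gamma> = of_int a + of_int b * omega d"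
  have \<gamma>O: "\<gamma> \<in> OK d" unfolding \<gamma>_def by (rule OK_intro)
  have lt1: "cmod (of_nat k * q - \<gamma>) < 1"
  proof -
    have "(cmod (of_nat k * q - \<gamma>))^2 < 1" using a geo \<gamma>_def by simp
    then show ?thesis by (metis abs_norm_cancel abs_square_less_1)
  qed
  have cg: "cmod g > 0" using x(3) by simp
  show ?thesis
  proof (cases "of_nat k * q = \<gamma>")
    case False
    have "of_nat k * x - \<gamma> * g = g * (of_nat k * q - \<gamma>)" unfolding xq by (simp add: algebra_simps)
    then have e: "cmod (of_nat k * x - \<gamma> * g) = cmod g * cmod (of_nat k * q - \<gamma>)" by (simp add: norm_mult)
    have "0 < cmod (of_nat k * q - \<gamma>)" using False by simp
    then have "0 < cmod (of_nat k * x - \<gamma> * g) \<and> cmod (of_nat k * x - \<gamma> * g) < cmod g"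
      unfolding e using lt1 cg by (simp add: mult_pos_pos)
    then show ?thesis using \<gamma>O OK_of_nat by blast
  next
    case True
    define P where "P j \<longleftrightarrow> 1 \<le> j \<and> of_nat j * q \<in> OK d" for j :: nat
    have Pk: "P k" unfolding P_def using kb True \<gamma>O by simp
    define k0 where "k0 = (LEAST j. P j)"
    have Pk0: "P k0" unfolding k0_def using Pk by (rule LeastI)
    have k0k: "k0 \<le> k" unfolding k0_def using Pk by (rule Least_le)
    have k0ne1: "k0 \<noteq> 1" using Pk0 qO unfolding P_def by auto
    then obtain p where p: "prime p" "p dvd k0" using prime_factor_nat by blast
    obtain k' where k': "k0 = p * k'" using p by blast
    have p2: "p \<ge> 2" using prime_ge_2_nat p by blast
    have k'1: "k' \<ge> 1" using Pk0 k' unfolding P_def by (cases "k' = 0") auto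
    have "k' < k0" using k' p2 k'1 by simp
    then have nPk': "\<not> P k'" unfolding k0_def by (rule not_less_Least)
    then have vO: "of_nat k' * q \<notin> OK d" using k'1 unfolding P_def by simp
    define \<beta> where "\<beta> = of_nat k0 * q"
    have \<beta>O: "\<beta> \<in> OK d" using Pk0 unfolding P_def \<beta>_def by simp
    have \<beta>p: "\<beta> / of_nat p = of_nat k' * q" unfolding \<beta>_def k' using p2 by simp
    have "p \<le> K" using p k0k kb(2) by (metis dvd_imp_le le_trans not_gr0 Pk0 P_def not_one_le_zero)
    then obtain \<beta>' \<mu> where bm: "\<beta>' \<in> OK d" "\<mu> \<in> OK d" "\<beta> * \<beta>' = 1 + of_nat p * \<mu>"
      using inert[OF p(1) _ \<beta>O] \<beta>p vO by auto
    define s where "s = of_nat k' * \<beta>'"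
    have sO: "s \<in> OK d" unfolding s_def using bm by simp
    have pc: "(of_nat p :: complex) \<noteq> 0" using p2 by simp
    have "of_nat p * (s * q) = \<beta> * \<beta>'" unfolding s_def \<beta>_def k' by (simp add: algebra_simps)
    then have "of_nat p * (s * q) = 1 + of_nat p * \<mu>" using bm by simp
    then have "s * q - \<mu> = 1 / of_nat p" using pc by (simp add: field_simps)
    moreover have "s * x - \<mu> * g = g * (s * q - \<mu>)" unfolding xq by (simp add: algebra_simps)
    ultimately have e: "s * x - \<mu> * g = g / of_nat p" by simp
    have "cmod (s * x - \<mu> * g) = cmod g / real p" unfolding e by (simp add: norm_divide)
    moreover have "cmod g / real p < cmod g" using cg p2 by (simp add: divide_less_eq)
    moreover have "0 < cmod g / real p" using cg p2 by simp
    ultimately show ?thesis using sO bm by metis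
  qed
qed

lemma bezout_from_DH:
  assumes DH: "\<And>x g. x \<in> OK d \<Longrightarrow> g \<in> OK d \<Longrightarrow> g \<noteq> 0 \<Longrightarrow> \<not> dvdO d g x \<Longrightarrow>
       \<exists>s\<in>OK d. \<exists>\<gamma>\<in>OK d. 0 < cmod (s * x - \<gamma> * g) \<and> cmod (s * x - \<gamma> * g) < cmod g"
    and xy: "x \<in> OK d" "y \<in> OK d"
  shows "\<exists>g\<in>OK d. dvdO d g x \<and> dvdO d g y \<and> (\<exists>u\<in>OK d. \<exists>v\<in>OK d. g = u * x + v * y)"
proof (cases "x = 0 \<and> y = 0")
  case True
  have "dvdO d 0 x" "dvdO d 0 y" using True dvdO_0[OF OK_0] by auto
  moreover have "(0::complex) = 0 * x + 0 * y" by simp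
  ultimately show ?thesis using OK_0 by blast
next
  case False
  define I where "I h \<longleftrightarrow> (\<exists>u\<in>OK d. \<exists>v\<in>OK d. h = u * x + v * y)" for h
  define P where "P h \<longleftrightarrow> h \<noteq> 0 \<and> I h" for h
  have "x = 1 * x + 0 * y" "y = 0 * x + 1 * y" by simp_all
  then have Ix: "I x" "I y" unfolding I_def using OK_0 OK_1 by blast+
  have "P x \<or> P y" using False Ix unfolding P_def by auto
  then obtain h0 where "P h0" by blast
  then obtain g where g: "P g" "\<And>h. P h \<Longrightarrow> inorm g \<le> inorm h"
    using ex_has_least_nat[of P h0 inorm] by blast
  obtain ug vg where ugv: "ug \<in> OK d" "vg \<in> OK d" "g = ug * x + vg * y" using g(1) unfolding P_def I_def by blast
  have gO: "g \<in> OK d" "g \<noteq> 0" using ugv xy g(1) unfolding P_def by auto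
  have dv: "dvdO d g t" if t: "I t" for t
  proof (rule ccontr)
    assume nd: "\<not> dvdO d g t"
    obtain ut vt where utv: "ut \<in> OK d" "vt \<in> OK d" "t = ut * x + vt * y" using t unfolding I_def by blast
    have tO: "t \<in> OK d" using utv xy by simp
    obtain s \<gamma> where sg: "s \<in> OK d" "\<gamma> \<in> OK d" "0 < cmod (s * t - \<gamma> * g)" "cmod (s * t - \<gamma> * g) < cmod g"
      using DH[OF tO gO nd] by blast
    define r where "r = s * t - \<gamma> * g"
    have "r = (s * ut - \<gamma> * ug) * x + (s * vt - \<gamma> * vg) * y"
      unfolding r_def utv(3) ugv(3) by (simp add: algebra_simps)
    moreover have "s * ut - \<gamma> * ug \<in> OK d" "s * vt - \<gamma> * vg \<in> OK d" using sg utv ugv by auto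
    ultimately have "I r" unfolding I_def by blast
    moreover have "r \<noteq> 0" using sg(3) r_def by auto
    ultimately have "P r" unfolding P_def by simp
    then have le: "inorm g \<le> inorm r" using g(2) by blast
    have rO: "r \<in> OK d" unfolding r_def using sg tO gO by simp
    have "(cmod r)^2 < (cmod g)^2" using sg(3,4) r_def by (simp add: power_strict_mono)
    then have "real (inorm r) < real (inorm g)" using inorm_OK(2)[OF rO] inorm_OK(2)[OF gO(1)] by simp
    then show False using le by simp
  qed
  show ?thesis using dv Ix gO ugv by blast
qed

lemma inert_from_norm:
  assumes p: "prime p"
    and nm: "\<forall>a b. \<not> (int p dvd a \<and> int p dvd b) \<longrightarrow> \<not> int p dvd (a * a + trw d * a * b + nmw d * (b * b))"
    and \<beta>: "\<beta> \<in> OK d" "\<beta> / of_nat p \<notin> OK d"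
  shows "\<exists>\<beta>'\<in>OK d. \<exists>\<mu>\<in>OK d. \<beta> * \<beta>' = 1 + of_nat p * \<mu>"
proof -
  obtain a b where ab: "\<beta> = of_int a + of_int b * omega d" using \<beta>(1) by (auto simp: OK_iff)
  have p0: "(of_nat p :: complex) \<noteq> 0" using p prime_gt_0_nat by auto
  have nd: "\<not> (int p dvd a \<and> int p dvd b)"
  proof
    assume "int p dvd a \<and> int p dvd b"
    then obtain a' b' where "a = int p * a'" "b = int p * b'" by (auto elim!: dvdE)
    then have "\<beta> / of_nat p = of_int a' + of_int b' * omega d" using ab p0 by (simp add: field_simps)
    then show False using \<beta>(2) OK_intro by simp
  qed
  define N where "N = a * a + trw d * a * b + nmw d * (b * b)"
  have "\<not> int p dvd N" using nm nd N_def by blast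
  moreover have "prime (int p)" using p by simp
  ultimately have "coprime (int p) N" using prime_imp_coprime by blast
  then have "gcd N (int p) = 1" by (simp add: coprime_iff_gcd_eq_1 gcd.commute)
  then obtain u v where uv: "u * N + v * int p = 1" using bezout_int[of N "int p"] by auto
  define bb where "bb = of_int u * cnj \<beta>"
  have "\<beta> * cnj \<beta> = of_int N" using norm_form[OF ab] N_def by (simp add: power2_eq_square)
  then have "\<beta> * bb = of_int (u * N)" unfolding bb_def by (simp add: algebra_simps)
  also have "u * N = 1 + int p * (- v)" using uv by (simp add: algebra_simps)
  finally have e: "\<beta> * bb = 1 + of_nat p * of_int (- v)" by simp
  have "bb \<in> OK d" unfolding bb_def using \<beta>(1) by simp
  then show ?thesis using e OK_of_int by blast
qed

end


lemma nq_intro: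
  assumes "d < 0"
    and bez: "\<And>x y. x \<in> OK d \<Longrightarrow> y \<in> OK d \<Longrightarrow>
       \<exists>g\<in>OK d. dvdO d g x \<and> dvdO d g y \<and> (\<exists>u\<in>OK d. \<exists>v\<in>OK d. g = u * x + v * y)"
    and ne: "\<And>x. x \<in> OK d \<Longrightarrow> x \<noteq> 0 \<Longrightarrow> \<exists>u. unitO d u \<and> u * x \<in> A d"
    and nu: "\<And>x u. x \<in> A d \<Longrightarrow> unitO d u \<Longrightarrow> u * x \<in> A d \<Longrightarrow> u = 1"
  shows "nqring d"
proof -
  have q: "qring d" using assms(1) by unfold_locales
  have b: "bqring d" using q bez by (simp add: bqring_def bqring_axioms_def)
  show ?thesis using b ne nu by (simp add: nqring_def nqring_axioms_def)
qed

lemma approx_half: "\<exists>k::nat. 1 \<le> k \<and> k \<le> 1 \<and> (\<exists>b::int. \<bar>real k * Y - of_int b\<bar> \<le> 1/2)"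
proof -
  define b where "b = \<lfloor>Y + 1/2\<rfloor>"
  have "of_int b \<le> Y + 1/2" "Y + 1/2 < of_int b + 1" unfolding b_def by linarith+
  then have "\<bar>real 1 * Y - of_int b\<bar> \<le> 1/2" unfolding abs_le_iff by simp
  then show ?thesis by (intro exI[of _ 1]) auto
qed

lemma approx_dir:
  assumes "K \<ge> 1"
  shows "\<exists>k::nat. 1 \<le> k \<and> k \<le> K \<and> (\<exists>b::int. \<bar>real k * Y - of_int b\<bar> \<le> 1 / real K)"
proof -
  obtain q :: int and p :: "nat \<Rightarrow> int" where qp: "0 < q" "q \<le> int (K ^ 1)"
    "\<And>i. i < 1 \<Longrightarrow> \<bar>of_int q * (\<lambda>_. Y) i - of_int (p i)\<bar> < 1 / real K"
    using Dirichlet_approx_simult[where \<theta>="\<lambda>_. Y" and N=K and n=1] assms by auto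
  define k where "k = nat q"
  have "real k = of_int q" using qp k_def by simp
  then have "\<bar>real k * Y - of_int (p 0)\<bar> \<le> 1 / real K" using qp(3)[of 0] by simp
  moreover have "1 \<le> k" "k \<le> K" using qp k_def by auto
  ultimately show ?thesis by blast
qed

lemma nm_check:
  fixes p t c :: int
  assumes S: "\<forall>i. 0 \<le> i \<and> i < p \<longrightarrow> i \<in> S"
    and chk: "\<forall>i\<in>S. \<forall>j\<in>S. (i \<noteq> 0 \<or> j \<noteq> 0) \<longrightarrow> (i * i + t * i * j + c * (j * j)) mod p \<noteq> 0"
    and p: "p > 0"
  shows "\<forall>a b. \<not> (p dvd a \<and> p dvd b) \<longrightarrow> \<not> p dvd (a * a + t * a * b + c * (b * b))"
proof (intro allI impI notI)
  fix a b assume nd: "\<not> (p dvd a \<and> p dvd b)" and dv: "p dvd (a * a + t * a * b + c * (b * b))"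
  define i where "i = a mod p"
  define j where "j = b mod p"
  have ij: "i \<in> S" "j \<in> S" using S p unfolding i_def j_def by auto
  have "i \<noteq> 0 \<or> j \<noteq> 0" using nd unfolding i_def j_def by (auto simp: dvd_eq_mod_eq_0)
  moreover have "(a * a + t * a * b + c * (b * b)) mod p = (i * i + t * i * j + c * (j * j)) mod p"
  proof -
    define A where "A = a div p"
    define B where "B = b div p"
    have a: "a = p * A + i" unfolding A_def i_def by simp
    have b: "b = p * B + j" unfolding B_def j_def by simp
    have "a * a + t * a * b + c * (b * b) = (i * i + t * i * j + c * (j * j)) +
      (p * A * A + 2 * A * i + t * (p * A * B + A * j + i * B) + c * (p * B * B + 2 * B * j)) * p"
      unfolding a b by (simp add: algebra_simps)
    then show ?thesis by simp
  qed
  ultimately show False using chk ij dv by (simp add: dvd_eq_mod_eq_0)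
qed

lemma S2: "\<forall>i::int. 0 \<le> i \<and> i < 2 \<longrightarrow> i \<in> {0, 1}" by auto
lemma S3: "\<forall>i::int. 0 \<le> i \<and> i < 3 \<longrightarrow> i \<in> {0, 1, 2}" by auto
lemma S5: "\<forall>i::int. 0 \<le> i \<and> i < 5 \<longrightarrow> i \<in> {0, 1, 2, 3, 4}" by auto
lemma S7: "\<forall>i::int. 0 \<le> i \<and> i < 7 \<longrightarrow> i \<in> {0, 1, 2, 3, 4, 5, 6}" by auto

lemma not_prime_even: "(n::nat) > 2 \<Longrightarrow> even n \<Longrightarrow> \<not> prime n"
proof
  assume n: "n > 2" "even n" "prime n"
  then have "\<forall>m. m dvd n \<longrightarrow> m = 1 \<or> m = n" using prime_nat_iff by blast
  then have "(2::nat) = 1 \<or> 2 = n" using n(2) by blast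
  then show False using n(1) by simp
qed

lemma not_prime_468: "\<not> prime (4::nat)" "\<not> prime (6::nat)" "\<not> prime (8::nat)"
  using not_prime_even by simp_all

lemma small_primes: "prime (p::nat) \<Longrightarrow> p \<le> 8 \<Longrightarrow> p = 2 \<or> p = 3 \<or> p = 5 \<or> p = 7"
proof -
  assume p: "prime p" "p \<le> 8"
  then have "p \<ge> 2" using prime_ge_2_nat by blast
  then have "p = 2 \<or> p = 3 \<or> p = 4 \<or> p = 5 \<or> p = 6 \<or> p = 7 \<or> p = 8" using p(2) by auto
  then show ?thesis using p(1) not_prime_468 by auto
qed



lemma nq_from:
  assumes d: "d < 0"
    and approxY: "\<And>Y::real. \<exists>k::nat. 1 \<le> k \<and> k \<le> K \<and> (\<exists>b::int. \<bar>real k * Y - of_int b\<bar> \<le> delta)"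
    and geo: "1/4 + (delta * Im (omega d))^2 < 1"
    and inertp: "\<And>p. prime p \<Longrightarrow> p \<le> K \<Longrightarrow>
        \<forall>a b. \<not> (int p dvd a \<and> int p dvd b) \<longrightarrow> \<not> int p dvd (a * a + trw d * a * b + nmw d * (b * b))"
    and ne: "\<And>x. x \<in> OK d \<Longrightarrow> x \<noteq> 0 \<Longrightarrow> \<exists>u. unitO d u \<and> u * x \<in> A d"
    and nu: "\<And>x u. x \<in> A d \<Longrightarrow> unitO d u \<Longrightarrow> u * x \<in> A d \<Longrightarrow> u = 1"
  shows "nqring d"
proof -
  interpret qring d using d by unfold_locales
  have inert: "\<And>p \<beta>. prime p \<Longrightarrow> p \<le> K \<Longrightarrow> \<beta> \<in> OK d \<Longrightarrow> \<beta> / of_nat p \<notin> OK d \<Longrightarrow>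
                   \<exists>\<beta>'\<in>OK d. \<exists>\<mu>\<in>OK d. \<beta> * \<beta>' = 1 + of_nat p * \<mu>"
  proof -
    fix p \<beta> assume h: "prime p" "p \<le> K" "\<beta> \<in> OK d" "\<beta> / of_nat p \<notin> OK d"
    show "\<exists>\<beta>'\<in>OK d. \<exists>\<mu>\<in>OK d. \<beta> * \<beta>' = 1 + of_nat p * \<mu>"
      by (rule inert_from_norm[OF h(1) inertp[OF h(1,2)] h(3,4)])
  qed
  have DH: "\<And>x g. x \<in> OK d \<Longrightarrow> g \<in> OK d \<Longrightarrow> g \<noteq> 0 \<Longrightarrow> \<not> dvdO d g x \<Longrightarrow>
       \<exists>s\<in>OK d. \<exists>\<gamma>\<in>OK d. 0 < cmod (s * x - \<gamma> * g) \<and> cmod (s * x - \<gamma> * g) < cmod g"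
    by (rule DH_generic[OF approxY geo inert])
  show ?thesis
    by (rule nq_intro[OF d bezout_from_DH[OF DH] ne nu]) auto
qed

lemma no_prime_le1: "prime (p::nat) \<Longrightarrow> p \<le> 1 \<Longrightarrow> P"
proof -
  assume "prime p" "p \<le> 1"
  then have False using prime_ge_2_nat[of p] by simp
  then show P ..
qed

lemma pm1_case:
  assumes "d < 0" "nmw d \<ge> 2" "trw d = 0 \<or> trw d = 1" "d \<noteq> -1" "d \<noteq> -3"
  shows "\<And>x. x \<in> OK d \<Longrightarrow> x \<noteq> 0 \<Longrightarrow> \<exists>u. unitO d u \<and> u * x \<in> A d"
    and "\<And>x u. x \<in> A d \<Longrightarrow> unitO d u \<Longrightarrow> u * x \<in> A d \<Longrightarrow> u = 1"
proof -
  have q: "qring d" using assms(1) by unfold_locales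
  show "\<And>x. x \<in> OK d \<Longrightarrow> x \<noteq> 0 \<Longrightarrow> \<exists>u. unitO d u \<and> u * x \<in> A d"
    using norm_pm1(1)[OF q assms(2-5)] by blast
  show "\<And>x u. x \<in> A d \<Longrightarrow> unitO d u \<Longrightarrow> u * x \<in> A d \<Longrightarrow> u = 1"
    using norm_pm1(2)[OF q assms(2-5)] by blast
qed

lemma Im_w_val: "d < 0 \<Longrightarrow> Im (omega d) = (if d mod 4 = 1 then sqrt (of_int (-d)) / 2 else sqrt (of_int (-d)))"
  by (simp add: omega_def csqrt_int_def)

lemma nq_m1: "nqring (-1)"
proof (rule nq_from[OF _ approx_half])
  have q: "qring (-1)" by unfold_locales simp
  show "1/4 + (1/2 * Im (omega (-1)))^2 < 1" by (simp add: Im_w_val power_mult_distrib power_divide)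
  show "\<And>x. x \<in> OK (-1) \<Longrightarrow> x \<noteq> 0 \<Longrightarrow> \<exists>u. unitO (-1) u \<and> u * x \<in> A (-1)"
    using norm_from_units(1)[OF q, of 4 "pi/2"] units_m1 by simp
  show "\<And>x u. x \<in> A (-1) \<Longrightarrow> unitO (-1) u \<Longrightarrow> u * x \<in> A (-1) \<Longrightarrow> u = 1"
    using norm_from_units(2)[OF q, of 4 "pi/2"] units_m1 by simp
qed (auto elim: no_prime_le1)

lemma nq_m3: "nqring (-3)"
proof (rule nq_from[OF _ approx_half])
  have q: "qring (-3)" by unfold_locales simp
  show "1/4 + (1/2 * Im (omega (-3)))^2 < 1" by (simp add: Im_w_val power_mult_distrib power_divide)
  show "\<And>x. x \<in> OK (-3) \<Longrightarrow> x \<noteq> 0 \<Longrightarrow> \<exists>u. unitO (-3) u \<and> u * x \<in> A (-3)"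
    using norm_from_units(1)[OF q, of 6 "pi/3"] units_m3 by simp
  show "\<And>x u. x \<in> A (-3) \<Longrightarrow> unitO (-3) u \<Longrightarrow> u * x \<in> A (-3) \<Longrightarrow> u = 1"
    using norm_from_units(2)[OF q, of 6 "pi/3"] units_m3 by simp
qed (auto elim: no_prime_le1)

lemma nq_m2: "nqring (-2)"
proof (rule nq_from[OF _ approx_half])
  show "1/4 + (1/2 * Im (omega (-2)))^2 < 1" by (simp add: Im_w_val power_mult_distrib power_divide)
  show "\<And>x. x \<in> OK (-2) \<Longrightarrow> x \<noteq> 0 \<Longrightarrow> \<exists>u. unitO (-2) u \<and> u * x \<in> A (-2)"
    using pm1_case(1)[of "-2"] by (simp add: trw_def nmw_def)
  show "\<And>x u. x \<in> A (-2) \<Longrightarrow> unitO (-2) u \<Longrightarrow> u * x \<in> A (-2) \<Longrightarrow> u = 1"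
    using pm1_case(2)[of "-2"] by (simp add: trw_def nmw_def)
qed (auto elim: no_prime_le1)

lemma nq_m7: "nqring (-7)"
proof (rule nq_from[OF _ approx_half])
  show "1/4 + (1/2 * Im (omega (-7)))^2 < 1" by (simp add: Im_w_val power_mult_distrib power_divide)
  show "\<And>x. x \<in> OK (-7) \<Longrightarrow> x \<noteq> 0 \<Longrightarrow> \<exists>u. unitO (-7) u \<and> u * x \<in> A (-7)"
    using pm1_case(1)[of "-7"] by (simp add: trw_def nmw_def)
  show "\<And>x u. x \<in> A (-7) \<Longrightarrow> unitO (-7) u \<Longrightarrow> u * x \<in> A (-7) \<Longrightarrow> u = 1"
    using pm1_case(2)[of "-7"] by (simp add: trw_def nmw_def)
qed (auto elim: no_prime_le1)

lemma nq_m11: "nqring (-11)"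
proof (rule nq_from[OF _ approx_half])
  show "1/4 + (1/2 * Im (omega (-11)))^2 < 1" by (simp add: Im_w_val power_mult_distrib power_divide)
  show "\<And>x. x \<in> OK (-11) \<Longrightarrow> x \<noteq> 0 \<Longrightarrow> \<exists>u. unitO (-11) u \<and> u * x \<in> A (-11)"
    using pm1_case(1)[of "-11"] by (simp add: trw_def nmw_def)
  show "\<And>x u. x \<in> A (-11) \<Longrightarrow> unitO (-11) u \<Longrightarrow> u * x \<in> A (-11) \<Longrightarrow> u = 1"
    using pm1_case(2)[of "-11"] by (simp add: trw_def nmw_def)
qed (auto elim: no_prime_le1)

lemma inert2: "c mod 2 = 1 \<Longrightarrow> \<forall>a b. \<not> (int 2 dvd a \<and> int 2 dvd b) \<longrightarrow> \<not> int 2 dvd (a * a + 1 * a * b + c * (b * b))"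
  using nm_check[OF S2, of 1 c] by (simp add: mod_simps)



lemma nq_m19: "nqring (-19)"
proof (rule nq_from[where K=3 and delta="1/real 3"])
  show "\<And>Y. \<exists>k::nat. 1 \<le> k \<and> k \<le> 3 \<and> (\<exists>b::int. \<bar>real k * Y - of_int b\<bar> \<le> 1 / real 3)"
    using approx_dir[of 3] by simp
  show "1/4 + (1/real 3 * Im (omega (-19)))^2 < 1" by (simp add: Im_w_val power_mult_distrib power_divide)
  show "\<forall>a b. \<not> (int p dvd a \<and> int p dvd b) \<longrightarrow> \<not> int p dvd (a * a + trw (-19) * a * b + nmw (-19) * (b * b))"
    if "prime p" "p \<le> 3" for p
  proof -
    have pcases: "p = 2 \<or> p = 3" using small_primes[OF that(1)] that(2) by auto
    have i2: "\<forall>a b. \<not> (int 2 dvd a \<and> int 2 dvd b) \<longrightarrow> \<not> int 2 dvd (a * a + 1 * a * b + 5 * (b * b))" using inert2[of 5] by simp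
    have i3: "\<forall>a b. \<not> (int 3 dvd a \<and> int 3 dvd b) \<longrightarrow> \<not> int 3 dvd (a * a + 1 * a * b + 5 * (b * b))" using nm_check[OF S3, of 1 5] by simp
    show ?thesis using pcases i2 i3 by (auto simp: trw_def nmw_def)
  qed
  show "\<And>x. x \<in> OK (-19) \<Longrightarrow> x \<noteq> 0 \<Longrightarrow> \<exists>u. unitO (-19) u \<and> u * x \<in> A (-19)"
    using pm1_case(1)[of "-19"] by (simp add: trw_def nmw_def)
  show "\<And>x u. x \<in> A (-19) \<Longrightarrow> unitO (-19) u \<Longrightarrow> u * x \<in> A (-19) \<Longrightarrow> u = 1"
    using pm1_case(2)[of "-19"] by (simp add: trw_def nmw_def)
qed simp

lemma nq_m43: "nqring (-43)"
proof (rule nq_from[where K=4 and delta="1/real 4"])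
  show "\<And>Y. \<exists>k::nat. 1 \<le> k \<and> k \<le> 4 \<and> (\<exists>b::int. \<bar>real k * Y - of_int b\<bar> \<le> 1 / real 4)"
    using approx_dir[of 4] by simp
  show "1/4 + (1/real 4 * Im (omega (-43)))^2 < 1" by (simp add: Im_w_val power_mult_distrib power_divide)
  show "\<forall>a b. \<not> (int p dvd a \<and> int p dvd b) \<longrightarrow> \<not> int p dvd (a * a + trw (-43) * a * b + nmw (-43) * (b * b))"
    if "prime p" "p \<le> 4" for p
  proof -
    have pcases: "p = 2 \<or> p = 3" using small_primes[OF that(1)] that(2) by auto
    have i2: "\<forall>a b. \<not> (int 2 dvd a \<and> int 2 dvd b) \<longrightarrow> \<not> int 2 dvd (a * a + 1 * a * b + 11 * (b * b))" using inert2[of 11] by simp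
    have i3: "\<forall>a b. \<not> (int 3 dvd a \<and> int 3 dvd b) \<longrightarrow> \<not> int 3 dvd (a * a + 1 * a * b + 11 * (b * b))" using nm_check[OF S3, of 1 11] by simp
    show ?thesis using pcases i2 i3 by (auto simp: trw_def nmw_def)
  qed
  show "\<And>x. x \<in> OK (-43) \<Longrightarrow> x \<noteq> 0 \<Longrightarrow> \<exists>u. unitO (-43) u \<and> u * x \<in> A (-43)"
    using pm1_case(1)[of "-43"] by (simp add: trw_def nmw_def)
  show "\<And>x u. x \<in> A (-43) \<Longrightarrow> unitO (-43) u \<Longrightarrow> u * x \<in> A (-43) \<Longrightarrow> u = 1"
    using pm1_case(2)[of "-43"] by (simp add: trw_def nmw_def)
qed simp

lemma nq_m67: "nqring (-67)"
proof (rule nq_from[where K=5 and delta="1/real 5"])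
  show "\<And>Y. \<exists>k::nat. 1 \<le> k \<and> k \<le> 5 \<and> (\<exists>b::int. \<bar>real k * Y - of_int b\<bar> \<le> 1 / real 5)"
    using approx_dir[of 5] by simp
  show "1/4 + (1/real 5 * Im (omega (-67)))^2 < 1" by (simp add: Im_w_val power_mult_distrib power_divide)
  show "\<forall>a b. \<not> (int p dvd a \<and> int p dvd b) \<longrightarrow> \<not> int p dvd (a * a + trw (-67) * a * b + nmw (-67) * (b * b))"
    if "prime p" "p \<le> 5" for p
  proof -
    have pcases: "p = 2 \<or> p = 3 \<or> p = 5" using small_primes[OF that(1)] that(2) by auto
    have i2: "\<forall>a b. \<not> (int 2 dvd a \<and> int 2 dvd b) \<longrightarrow> \<not> int 2 dvd (a * a + 1 * a * b + 17 * (b * b))" using inert2[of 17] by simp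
    have i3: "\<forall>a b. \<not> (int 3 dvd a \<and> int 3 dvd b) \<longrightarrow> \<not> int 3 dvd (a * a + 1 * a * b + 17 * (b * b))" using nm_check[OF S3, of 1 17] by simp
    have i5: "\<forall>a b. \<not> (int 5 dvd a \<and> int 5 dvd b) \<longrightarrow> \<not> int 5 dvd (a * a + 1 * a * b + 17 * (b * b))" using nm_check[OF S5, of 1 17] by simp
    show ?thesis using pcases i2 i3 i5 by (auto simp: trw_def nmw_def)
  qed
  show "\<And>x. x \<in> OK (-67) \<Longrightarrow> x \<noteq> 0 \<Longrightarrow> \<exists>u. unitO (-67) u \<and> u * x \<in> A (-67)"
    using pm1_case(1)[of "-67"] by (simp add: trw_def nmw_def)
  show "\<And>x u. x \<in> A (-67) \<Longrightarrow> unitO (-67) u \<Longrightarrow> u * x \<in> A (-67) \<Longrightarrow> u = 1"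
    using pm1_case(2)[of "-67"] by (simp add: trw_def nmw_def)
qed simp

lemma nq_m163: "nqring (-163)"
proof (rule nq_from[where K=8 and delta="1/real 8"])
  show "\<And>Y. \<exists>k::nat. 1 \<le> k \<and> k \<le> 8 \<and> (\<exists>b::int. \<bar>real k * Y - of_int b\<bar> \<le> 1 / real 8)"
    using approx_dir[of 8] by simp
  show "1/4 + (1/real 8 * Im (omega (-163)))^2 < 1" by (simp add: Im_w_val power_mult_distrib power_divide)
  show "\<forall>a b. \<not> (int p dvd a \<and> int p dvd b) \<longrightarrow> \<not> int p dvd (a * a + trw (-163) * a * b + nmw (-163) * (b * b))"
    if "prime p" "p \<le> 8" for p
  proof -
    have pcases: "p = 2 \<or> p = 3 \<or> p = 5 \<or> p = 7" using small_primes[OF that(1)] that(2) by auto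
    have i2: "\<forall>a b. \<not> (int 2 dvd a \<and> int 2 dvd b) \<longrightarrow> \<not> int 2 dvd (a * a + 1 * a * b + 41 * (b * b))" using inert2[of 41] by simp
    have i3: "\<forall>a b. \<not> (int 3 dvd a \<and> int 3 dvd b) \<longrightarrow> \<not> int 3 dvd (a * a + 1 * a * b + 41 * (b * b))" using nm_check[OF S3, of 1 41] by simp
    have i5: "\<forall>a b. \<not> (int 5 dvd a \<and> int 5 dvd b) \<longrightarrow> \<not> int 5 dvd (a * a + 1 * a * b + 41 * (b * b))" using nm_check[OF S5, of 1 41] by simp
    have i7: "\<forall>a b. \<not> (int 7 dvd a \<and> int 7 dvd b) \<longrightarrow> \<not> int 7 dvd (a * a + 1 * a * b + 41 * (b * b))" using nm_check[OF S7, of 1 41] by simp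
    show ?thesis using pcases i2 i3 i5 i7 by (auto simp: trw_def nmw_def)
  qed
  show "\<And>x. x \<in> OK (-163) \<Longrightarrow> x \<noteq> 0 \<Longrightarrow> \<exists>u. unitO (-163) u \<and> u * x \<in> A (-163)"
    using pm1_case(1)[of "-163"] by (simp add: trw_def nmw_def)
  show "\<And>x u. x \<in> A (-163) \<Longrightarrow> unitO (-163) u \<Longrightarrow> u * x \<in> A (-163) \<Longrightarrow> u = 1"
    using pm1_case(2)[of "-163"] by (simp add: trw_def nmw_def)
qed simp



lemma nq_all: "d \<in> {-163, -67, -43, -19, -11, -7, -3, -2, -1} \<Longrightarrow> nqring d"
  using nq_m1 nq_m2 nq_m3 nq_m7 nq_m11 nq_m19 nq_m43 nq_m67 nq_m163 by auto

theorem theorem2p2: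
  fixes d :: int and z :: complex and n :: int and t :: nat
  assumes "d \<in> {-163, -67, -43, -19, -11, -7, -3, -2, -1}"
    and "z \<in> OK d" and "z \<noteq> 0"
    and "n \<in> {1, 2}"
    and "t \<noteq> 1"
    and "I_star d n z = real t"
  shows "\<exists>k :: int. z * cnj z = of_int (2 * k)"
proof -
  interpret nqring d by (rule nq_all[OF assms(1)])
  obtain ms where ms: "finite (Dset z)" "prod_list ms = inorm z" "\<forall>m\<in>set ms. m \<ge> 2"
    "I_star d n z = prod_list (map (\<lambda>m. 1 + inverse (sqrt (real m) powi n)) ms)"
    using main_rep[OF assms(2,3)] by blast
  have zc: "z * cnj z = of_nat (inorm z)" using inorm_OK(1)[OF assms(2)] by simp
  show ?thesis
  proof (cases "even (inorm z)")
    case True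
    then obtain k where "inorm z = 2 * k" by blast
    then have "z * cnj z = of_int (2 * int k)" using zc by simp
    then show ?thesis by blast
  next
    case False
    have odd: "\<forall>m\<in>set ms. odd m \<and> m \<ge> 2"
    proof
      fix m assume m: "m \<in> set ms"
      have "m dvd inorm z" using prod_list_dvd[OF m] ms(2) by simp
      then have "odd m" using False dvd_trans by blast
      then show "odd m \<and> m \<ge> 2" using ms(3) m by simp
    qed
    have ne: "ms \<noteq> []"
    proof
      assume "ms = []"
      then have "real t = 1" using ms(4) assms(6) by simp
      then show False using assms(5) by simp
    qed
    have "prod_list (map (\<lambda>m. 1 + inverse (sqrt (real m) powi n)) ms) = real t"
      using ms(4) assms(6) by simp
    then have False using final_arith[OF ne odd] assms(4) by simp
    then show ?thesis ..
  qed
qed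


end
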